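(* Let $X$ be a Banach space, $A(t)\in\mathcal B(X)$ continuous in $t\in\mathbb R$, and suppose $x'=A(t)x$ admits a nonuniform $(h,k,\mu,\nu)$-dichotomy on $\mathbb R$ with constants $a<0\le b$, $\varepsilon\ge0$, $K>0$, where $h,k$ are differentiable. Let $f:\mathbb R\times X\to X$ be continuous and suppose there are constants $\alpha,\gamma>0$ such that for all $t\in\mathbb R$, $x,x_1,x_2\in X$: $\|f(t,x)\|\le\alpha\min\{h'(t)h(t)^{-1}\mu(|t|)^{-\varepsilon},k'(t)k(t)^{-1}\nu(|t|)^{-\varepsilon}\}$ and $\|f(t,x_1)-f(t,x_2)\|\le\gamma\min\{h'(t)h(t)^{-1}\mu(|t|)^{-\varepsilon},k'(t)k(t)^{-1}\nu(|t|)^{-\varepsilon}\}\|x_1-x_2\|$, and $K\gamma(1/|a|+1/b)<1$. Then $x'=A(t)x+f(t,x)$ is topologically equivalent to $x'=A(t)x$, and the equivalence function $H$ satisfies $\|H(t,x)-x\|\le K\alpha(1/|a|+1/b)$ for all $t\in\mathbb R$, $x\in X$.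
   Context: A growth rate is an increasing function $u:\mathbb R\to(0,\infty)$ with $u(0)=1$, $\lim_{t\to+\infty}u(t)=\infty$ and $\lim_{t\to-\infty}u(t)=0$; $h,k,\mu,\nu$ are growth rates. Nonuniform $(h,k,\mu,\nu)$-dichotomy on $\mathbb R$ for $x'=A(t)x$ with evolution operator $T(t,s)$ ($T(t,s)x(s)=x(t)$ for every solution): there are projections $P(t)$, $t\in\mathbb R$, with $P(t)T(t,s)=T(t,s)P(s)$ for all $t,s$, and constants $a<0\le b$, $\varepsilon\ge0$, $K>0$ such that $\|T(t,s)P(s)\|\le K(h(t)/h(s))^a\mu(|s|)^\varepsilon$ for $t\ge s$ and $\|T(t,s)Q(s)\|\le K(k(s)/k(t))^{-b}\nu(|s|)^\varepsilon$ for $s\ge t$, where $Q(t)=\mathrm{Id}-P(t)$. Topological equivalence: $x'=A(t)x$ and $x'=A(t)x+f(t,x)$ are topologically equivalent if there is $H:\mathbb R\times X\to X$ such that (i) $\|H(t,x)\|\to\infty$ as $\|x\|\to\infty$ uniformly in $t$; (ii) for each $t$, $H(t,\cdot)$ is a homeomorphism of $X$; (iii) $L(t,\cdot)=H(t,\cdot)^{-1}$ also satisfies (i); (iv) if $x(t)$ solves $x'=A(t)x+f(t,x)$ then $H(t,x(t))$ solves $x'=A(t)x$. *)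

theory Defs
  imports "HOL-Analysis.Analysis"
begin

definition growth_rate :: "(real \<Rightarrow> real) \<Rightarrow> bool" where
  "growth_rate u \<longleftrightarrow> strict_mono u \<and> (\<forall>t. u t > 0) \<and> u 0 = 1 \<and>
     filterlim u at_top at_top \<and> (u \<longlongrightarrow> 0) at_bot"

definition solves :: "(real \<Rightarrow> 'a::banach \<Rightarrow> 'a) \<Rightarrow> (real \<Rightarrow> 'a) \<Rightarrow> bool" where
  "solves F x \<longleftrightarrow> (\<forall>t. (x has_vector_derivative F t (x t)) (at t))"

definition evolution_op ::
  "(real \<Rightarrow> ('a::banach \<Rightarrow>\<^sub>L 'a)) \<Rightarrow> (real \<Rightarrow> real \<Rightarrow> ('a \<Rightarrow>\<^sub>L 'a)) \<Rightarrow> bool" where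
  "evolution_op A T \<longleftrightarrow>
     (\<forall>x. solves (\<lambda>t y. A t y) x \<longrightarrow> (\<forall>t s. T t s (x s) = x t))"

definition nonuniform_dichotomy ::
  "(real \<Rightarrow> real \<Rightarrow> ('a::banach \<Rightarrow>\<^sub>L 'a)) \<Rightarrow> (real \<Rightarrow> real) \<Rightarrow> (real \<Rightarrow> real) \<Rightarrow>
   (real \<Rightarrow> real) \<Rightarrow> (real \<Rightarrow> real) \<Rightarrow> real \<Rightarrow> real \<Rightarrow> real \<Rightarrow> real \<Rightarrow> bool" where
  "nonuniform_dichotomy T h k \<mu> \<nu> a b \<epsilon> K \<longleftrightarrow>
     a < 0 \<and> 0 \<le> b \<and> \<epsilon> \<ge> 0 \<and> K > 0 \<and>
     (\<exists>P :: real \<Rightarrow> ('a \<Rightarrow>\<^sub>L 'a).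
        (\<forall>t. P t o\<^sub>L P t = P t) \<and>
        (\<forall>t s. P t o\<^sub>L T t s = T t s o\<^sub>L P s) \<and>
        (\<forall>t s. t \<ge> s \<longrightarrow>
           norm (T t s o\<^sub>L P s) \<le> K * (h t / h s) powr a * \<mu> \<bar>s\<bar> powr \<epsilon>) \<and>
        (\<forall>t s. s \<ge> t \<longrightarrow>
           norm (T t s o\<^sub>L (id_blinfun - P s)) \<le> K * (k s / k t) powr (- b) * \<nu> \<bar>s\<bar> powr \<epsilon>))"

definition top_equiv_via ::
  "(real \<Rightarrow> 'a::banach \<Rightarrow> 'a) \<Rightarrow> (real \<Rightarrow> 'a \<Rightarrow> 'a) \<Rightarrow> (real \<Rightarrow> 'a \<Rightarrow> 'a) \<Rightarrow> bool" where
  "top_equiv_via F1 F2 H \<longleftrightarrow>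
     (\<forall>M. \<exists>R. \<forall>t x. norm x \<ge> R \<longrightarrow> norm (H t x) \<ge> M) \<and>
     (\<forall>t. \<exists>L. homeomorphism UNIV UNIV (H t) L) \<and>
     (\<forall>M. \<exists>R. \<forall>t y. norm y \<ge> R \<longrightarrow> norm (inv (H t) y) \<ge> M) \<and>
     (\<forall>x. solves F2 x \<longrightarrow> solves F1 (\<lambda>t. H t (x t)))"

end

theory Submission
  imports Defs
begin


definition prim :: "(real \<Rightarrow> 'a::banach) \<Rightarrow> real \<Rightarrow> real \<Rightarrow> 'a" where
  "prim g a t = (if a \<le> t then integral {a..t} g else - integral {t..a} g)"

lemma prim_shift:
  fixes g :: "real \<Rightarrow> 'a::banach"
  assumes g: "continuous_on UNIV g" and "c \<le> a" "c \<le> x"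
  shows "prim g a x = integral {c..x} g - integral {c..a} g"
proof -
  have int: "\<And>u v. g integrable_on {u..v}"
    by (rule integrable_continuous_interval) (use g continuous_on_subset in blast)
  show ?thesis
  proof (cases "a \<le> x")
    case True
    then show ?thesis using Henstock_Kurzweil_Integration.integral_combine[OF \<open>c \<le> a\<close> True int] by (simp add: prim_def algebra_simps)
  next
    case False
    then show ?thesis using Henstock_Kurzweil_Integration.integral_combine[OF \<open>c \<le> x\<close> _ int, of a] by (simp add: prim_def algebra_simps)
  qed
qed

lemma prim_deriv:
  fixes g :: "real \<Rightarrow> 'a::banach"
  assumes g: "continuous_on UNIV g"
  shows "(prim g a has_vector_derivative g t) (at t)"
proof -
  define c where "c = min a t - 1"
  have d: "((\<lambda>u. integral {c..u} g) has_vector_derivative g t) (at t within {c..t+1})"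
    by (rule integral_has_vector_derivative) (auto simp: c_def intro: continuous_on_subset[OF g])
  have "((\<lambda>u. integral {c..u} g) has_vector_derivative g t) (at t within {c<..<t+1})"
    by (rule has_vector_derivative_within_subset[OF d]) auto
  then have "((\<lambda>u. integral {c..u} g) has_vector_derivative g t) (at t)"
    by (subst (asm) has_vector_derivative_within_open) (auto simp: c_def)
  then have "((\<lambda>u. integral {c..u} g - integral {c..a} g) has_vector_derivative g t) (at t)"
    by (auto intro!: derivative_eq_intros)
  then show ?thesis
    by (rule has_vector_derivative_transform_within_open[where S="{c<..}"])
       (auto simp: c_def prim_shift[OF g, of "min a t - 1"])
qed

lemma prim_same[simp]: "prim g a a = 0"
  by (simp add: prim_def algebra_simps)




lemma dbound:
  fixes G :: "real \<Rightarrow> 'a::real_normed_vector"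
  assumes "a \<le> b"
    and G: "\<And>u. a \<le> u \<Longrightarrow> u \<le> b \<Longrightarrow> (G has_vector_derivative g u) (at u)"
    and P: "\<And>u. a \<le> u \<Longrightarrow> u \<le> b \<Longrightarrow> (\<Phi> has_real_derivative \<phi> u) (at u)"
    and B: "\<And>u. a \<le> u \<Longrightarrow> u \<le> b \<Longrightarrow> norm (g u) \<le> \<phi> u"
  shows "norm (G b - G a) \<le> \<Phi> b - \<Phi> a"
proof (cases "a = b")
  case True then show ?thesis by simp
next
  case False
  then have ab: "a < b" using assms(1) by simp
  show ?thesis
  proof (rule differentiable_bound_general[OF ab])
    show "continuous_on {a..b} G"
      using G by (intro continuous_at_imp_continuous_on ballI has_vector_derivative_continuous) auto
    show "continuous_on {a..b} \<Phi>"
      using P by (intro continuous_at_imp_continuous_on ballI DERIV_isCont) auto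
    show "\<And>x. a < x \<Longrightarrow> x < b \<Longrightarrow> (G has_vector_derivative g x) (at x)" using G by auto
    show "\<And>x. a < x \<Longrightarrow> x < b \<Longrightarrow> (\<Phi> has_vector_derivative \<phi> x) (at x)"
      using P by (auto simp: has_real_derivative_iff_has_vector_derivative[symmetric])
    show "\<And>x. a < x \<Longrightarrow> x < b \<Longrightarrow> norm (g x) \<le> \<phi> x" using B by auto
  qed
qed

fun picard :: "(real \<Rightarrow> 'v \<Rightarrow> 'v) \<Rightarrow> 'v::banach \<Rightarrow> real \<Rightarrow> nat \<Rightarrow> real \<Rightarrow> 'v" where
  "picard F x0 t0 0 = (\<lambda>t. x0)"
| "picard F x0 t0 (Suc n) = (\<lambda>t. x0 + prim (\<lambda>\<sigma>. F \<sigma> (picard F x0 t0 n \<sigma>)) t0 t)"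

locale lode =
  fixes F :: "real \<Rightarrow> 'v::banach \<Rightarrow> 'v" and Lm :: "real \<Rightarrow> real" and lm :: "real \<Rightarrow> real"
  assumes Fc: "continuous_on UNIV (\<lambda>(t, x). F t x)"
    and Lm_deriv: "\<And>t. (Lm has_real_derivative lm t) (at t)"
    and lm_nn: "\<And>t. lm t \<ge> 0"
    and lip: "\<And>t x y. norm (F t x - F t y) \<le> lm t * norm (x - y)"
begin

lemma Fcomp_cont: "continuous_on UNIV y \<Longrightarrow> continuous_on UNIV (\<lambda>t. F t (y t))"
proof -
  assume c: "continuous_on UNIV y"
  have "continuous_on UNIV (\<lambda>t. (t, y t))" by (intro continuous_on_Pair continuous_on_id c)
  then show ?thesis using continuous_on_compose2[OF Fc, of UNIV "\<lambda>t. (t, y t)"] by auto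
qed

lemma Lm_mono: "s \<le> t \<Longrightarrow> Lm s \<le> Lm t"
  by (rule DERIV_nonneg_imp_nondecreasing) (use Lm_deriv lm_nn in blast)+

lemma Lm_cont: "continuous_on S Lm"
  using Lm_deriv by (intro continuous_at_imp_continuous_on ballI DERIV_isCont) auto

lemma sol_cont: "(\<And>t. (y has_vector_derivative F t (y t)) (at t)) \<Longrightarrow> continuous_on S y"
  by (intro continuous_at_imp_continuous_on ballI has_vector_derivative_continuous) auto

lemma gron_fwd:
  assumes y1: "\<And>t. (y1 has_vector_derivative F t (y1 t)) (at t)"
    and y2: "\<And>t. (y2 has_vector_derivative F t (y2 t)) (at t)"
    and "t0 \<le> s"
  shows "norm (y1 s - y2 s) \<le> 2 * norm (y1 t0 - y2 t0) * exp (2 * (Lm s - Lm t0))"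
proof -
  define d where "d x = norm (y1 x - y2 x)" for x
  define E where "E x = exp (2 * (Lm x - Lm t0))" for x
  define \<psi> where "\<psi> x = d x / E x" for x
  have Epos: "E x > 0" for x by (simp add: E_def)
  have E1: "E x \<ge> 1" if "t0 \<le> x" for x
    using Lm_mono[OF that] by (simp add: E_def)
  have cont: "continuous_on {t0..s} \<psi>"
    unfolding \<psi>_def d_def E_def
    by (intro continuous_intros sol_cont[OF y1] sol_cont[OF y2] Lm_cont) auto
  obtain xm where xm: "xm \<in> {t0..s}" "\<And>x. x \<in> {t0..s} \<Longrightarrow> \<psi> x \<le> \<psi> xm"
    using continuous_attains_sup[OF compact_Icc _ cont] \<open>t0 \<le> s\<close> by auto
  define M where "M = \<psi> xm"
  have M0: "M \<ge> 0" by (auto simp: M_def \<psi>_def d_def intro!: divide_nonneg_pos Epos)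
  have dM: "d x \<le> M * E x" if "x \<in> {t0..s}" for x
    using xm(2)[OF that] Epos[of x] by (simp add: M_def \<psi>_def field_simps)
  have key: "d x \<le> d t0 + M * (E x - 1) / 2" if x: "x \<in> {t0..s}" for x
  proof -
    have "norm ((y1 x - y2 x) - (y1 t0 - y2 t0)) \<le> M * E x / 2 - M * E t0 / 2"
    proof (rule dbound[where g="\<lambda>u. F u (y1 u) - F u (y2 u)" and \<phi>="\<lambda>u. M * lm u * E u"])
      show "t0 \<le> x" using x by simp
      show "((\<lambda>u. y1 u - y2 u) has_vector_derivative F u (y1 u) - F u (y2 u)) (at u)" for u
        by (intro derivative_intros y1 y2)
      show "((\<lambda>u. M * E u / 2) has_real_derivative M * lm u * E u) (at u)" for u
        unfolding E_def by (auto intro!: derivative_eq_intros Lm_deriv)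
      show "norm (F u (y1 u) - F u (y2 u)) \<le> M * lm u * E u" if "t0 \<le> u" "u \<le> x" for u
      proof -
        have "norm (F u (y1 u) - F u (y2 u)) \<le> lm u * d u" using lip by (simp add: d_def)
        also have "\<dots> \<le> lm u * (M * E u)"
          by (rule mult_left_mono[OF dM lm_nn]) (use that x in auto)
        finally show ?thesis by (simp add: mult_ac)
      qed
    qed
    moreover have "d x \<le> d t0 + norm ((y1 x - y2 x) - (y1 t0 - y2 t0))"
      unfolding d_def by (metis add.commute diff_add_cancel norm_triangle_ineq)
    moreover have "E t0 = 1" by (simp add: E_def)
    ultimately show ?thesis by (simp add: field_simps)
  qed
  have "M \<le> d t0 + M / 2"
  proof -
    have e: "E xm \<ge> 1" using E1 xm(1) by auto
    have "M = d xm / E xm" by (simp add: M_def \<psi>_def)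
    also have "\<dots> \<le> (d t0 + M * (E xm - 1) / 2) / E xm"
      using key[OF xm(1)] Epos[of xm] by (intro divide_right_mono) auto
    also have "\<dots> = d t0 / E xm + M / 2 - M / (2 * E xm)"
      using Epos[of xm] by (simp add: field_simps)
    also have "\<dots> \<le> d t0 + M / 2"
    proof -
      have "d t0 / E xm \<le> d t0"
        using e Epos[of xm] by (simp add: d_def divide_le_eq mult_le_cancel_left1)
      moreover have "M / (2 * E xm) \<ge> 0" using M0 Epos[of xm] by simp
      ultimately show ?thesis by linarith
    qed
    finally show ?thesis .
  qed
  then have "M \<le> 2 * d t0" by simp
  then have "d s \<le> 2 * d t0 * E s"
    using dM[of s] \<open>t0 \<le> s\<close> Epos[of s] by (smt (verit) atLeastAtMost_iff mult_right_mono)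
  then show ?thesis by (simp add: d_def E_def)
qed

lemma refl_lode: "lode (\<lambda>t x. - F (-t) x) (\<lambda>t. - Lm (-t)) (\<lambda>t. lm (-t))"
proof
  show "continuous_on UNIV (\<lambda>(t, x). - F (- t) x)"
  proof -
    have "continuous_on UNIV (\<lambda>x::real \<times> 'v. (- fst x, snd x))" by (intro continuous_intros)
    then show ?thesis using continuous_on_compose2[OF Fc, of UNIV "\<lambda>x. (- fst x, snd x)"]
      by (auto intro!: continuous_intros simp: case_prod_unfold)
  qed
  show "((\<lambda>t. - Lm (- t)) has_real_derivative lm (- t)) (at t)" for t
    by (auto intro!: derivative_eq_intros DERIV_chain2[OF Lm_deriv])
  show "0 \<le> lm (- t)" for t by (rule lm_nn)
  show "norm (- F (- t) x - - F (- t) y) \<le> lm (- t) * norm (x - y)" for t x y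
    using lip[of "-t" x y] by (simp add: norm_minus_commute)
qed

lemma refl_sol:
  assumes "\<And>t. (y has_vector_derivative F t (y t)) (at t)"
  shows "((\<lambda>t. y (-t)) has_vector_derivative - F (-t) (y (-t))) (at t)"
proof -
  have "((y \<circ> uminus) has_vector_derivative (-1) *\<^sub>R F (-t) (y (-t))) (at t)"
    by (rule vector_diff_chain_at) (auto intro!: derivative_eq_intros assms)
  then show ?thesis by (simp add: o_def)
qed

lemma gronwall:
  assumes y1: "\<And>t. (y1 has_vector_derivative F t (y1 t)) (at t)"
    and y2: "\<And>t. (y2 has_vector_derivative F t (y2 t)) (at t)"
  shows "norm (y1 s - y2 s) \<le> 2 * norm (y1 t0 - y2 t0) * exp (2 * \<bar>Lm s - Lm t0\<bar>)"
proof (cases "t0 \<le> s")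
  case True
  then show ?thesis using gron_fwd[OF y1 y2 True] Lm_mono[OF True] by simp
next
  case False
  have "norm (y1 (- (-s)) - y2 (- (-s))) \<le> 2 * norm (y1 (- (-t0)) - y2 (- (-t0))) *
     exp (2 * (- Lm (- (-s)) - - Lm (- (-t0))))"
    by (rule lode.gron_fwd[OF refl_lode, of "\<lambda>t. y1 (-t)" "\<lambda>t. y2 (-t)" "-t0" "-s"])
       (use refl_sol[OF y1] refl_sol[OF y2] False in auto)
  then show ?thesis using Lm_mono[of s t0] False by simp
qed

lemma unique:
  assumes y1: "\<And>t. (y1 has_vector_derivative F t (y1 t)) (at t)"
    and y2: "\<And>t. (y2 has_vector_derivative F t (y2 t)) (at t)"
    and "y1 t0 = y2 t0"
  shows "y1 = y2"
proof
  fix s show "y1 s = y2 s" using gronwall[OF y1 y2, of s t0] assms(3) by simp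
qed

end



declare picard.simps[simp del]

context lode begin

abbreviation "pic x0 t0 \<equiv> picard F x0 t0"

lemma pic_cont_deriv:
  "continuous_on UNIV (pic x0 t0 n) \<and>
   (\<forall>t. (pic x0 t0 (Suc n) has_vector_derivative F t (pic x0 t0 n t)) (at t))"
proof (induction n)
  case 0
  have "continuous_on UNIV (\<lambda>t. F t x0)" by (rule Fcomp_cont) simp
  then show ?case by (auto intro!: derivative_eq_intros prim_deriv simp: picard.simps)
next
  case (Suc n)
  then have c: "continuous_on UNIV (pic x0 t0 (Suc n))"
    by (intro continuous_at_imp_continuous_on ballI has_vector_derivative_continuous) auto
  then have "continuous_on UNIV (\<lambda>t. F t (pic x0 t0 (Suc n) t))" by (rule Fcomp_cont)
  with c show ?case
    by (simp add: picard.simps(2)[of F x0 t0 "Suc n"])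
       (auto intro!: derivative_eq_intros prim_deriv)
qed

lemma pic_t0: "pic x0 t0 n t0 = x0"
  by (cases n) (auto simp: picard.simps)

lemma pow_deriv:
  assumes "(g has_real_derivative g') (at u)"
  shows "((\<lambda>u. c / fact (Suc n) * (g u) ^ Suc n) has_real_derivative c * (g u) ^ n / fact n * g') (at u)"
proof -
  have "((\<lambda>u. c / fact (Suc n) * (g u) ^ Suc n) has_real_derivative
     c / fact (Suc n) * (of_nat (Suc n) * (g' * (g u) ^ (Suc n - Suc 0)))) (at u)"
    by (intro DERIV_cmult DERIV_power assms)
  then show ?thesis
    by (rule DERIV_cong) (simp add: divide_simps)
qed

lemma pic_step_bound:
  assumes R: "R > 0"
    and B: "\<And>t. t \<in> {t0-R..t0+R} \<Longrightarrow> norm (pic x0 t0 (Suc 0) t - pic x0 t0 0 t) \<le> B"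
  shows "t \<in> {t0-R..t0+R} \<Longrightarrow> norm (pic x0 t0 (Suc n) t - pic x0 t0 n t) \<le> B * \<bar>Lm t - Lm t0\<bar> ^ n / fact n"
proof (induction n arbitrary: t)
  case 0 then show ?case using B by simp
next
  case (Suc n)
  define G where "G u = pic x0 t0 (Suc (Suc n)) u - pic x0 t0 (Suc n) u" for u
  have Gd: "(G has_vector_derivative F u (pic x0 t0 (Suc n) u) - F u (pic x0 t0 n u)) (at u)" for u
    unfolding G_def using pic_cont_deriv by (intro derivative_intros) auto
  have G0: "G t0 = 0" by (simp add: G_def pic_t0)
  have gb: "norm (F u (pic x0 t0 (Suc n) u) - F u (pic x0 t0 n u)) \<le> lm u * (B * \<bar>Lm u - Lm t0\<bar> ^ n / fact n)"
    if "u \<in> {t0-R..t0+R}" for u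
    using order_trans[OF lip mult_left_mono[OF Suc.IH[OF that] lm_nn]] .
  show ?case
  proof (cases "t0 \<le> t")
    case True
    have "norm (G t - G t0) \<le> B / fact (Suc n) * (Lm t - Lm t0) ^ Suc n - B / fact (Suc n) * (Lm t0 - Lm t0) ^ Suc n"
    proof (rule dbound[OF True Gd, where \<phi>="\<lambda>u. B * (Lm u - Lm t0) ^ n / fact n * lm u"])
      show "((\<lambda>u. B / fact (Suc n) * (Lm u - Lm t0) ^ Suc n) has_real_derivative B * (Lm u - Lm t0) ^ n / fact n * lm u) (at u)" for u
        by (rule pow_deriv) (auto intro!: derivative_eq_intros Lm_deriv)
      show "norm (F u (pic x0 t0 (Suc n) u) - F u (pic x0 t0 n u)) \<le> B * (Lm u - Lm t0) ^ n / fact n * lm u"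
        if "t0 \<le> u" "u \<le> t" for u
        using gb[of u] that Suc.prems Lm_mono[OF that(1)] by (auto simp: mult_ac)
    qed
    then show ?thesis using G0 Lm_mono[OF True] by (simp add: G_def field_simps)
  next
    case False
    have "norm (G t0 - G t) \<le> (- B) / fact (Suc n) * (Lm t0 - Lm t0) ^ Suc n - (- B) / fact (Suc n) * (Lm t0 - Lm t) ^ Suc n"
    proof (rule dbound[where \<phi>="\<lambda>u. B * (Lm t0 - Lm u) ^ n / fact n * lm u"])
      show "t \<le> t0" using False by simp
      show "(G has_vector_derivative F u (pic x0 t0 (Suc n) u) - F u (pic x0 t0 n u)) (at u)" for u by (rule Gd)
      show "((\<lambda>u. (- B) / fact (Suc n) * (Lm t0 - Lm u) ^ Suc n) has_real_derivative B * (Lm t0 - Lm u) ^ n / fact n * lm u) (at u)" for u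
        by (rule DERIV_cong[OF pow_deriv]) (auto intro!: derivative_eq_intros Lm_deriv)
      show "norm (F u (pic x0 t0 (Suc n) u) - F u (pic x0 t0 n u)) \<le> B * (Lm t0 - Lm u) ^ n / fact n * lm u"
        if "t \<le> u" "u \<le> t0" for u
        using gb[of u] that Suc.prems Lm_mono[OF that(2)] by (auto simp: mult_ac abs_minus_commute)
    qed
    then show ?thesis using G0 Lm_mono[of t t0] False by (simp add: G_def abs_minus_commute norm_minus_commute field_simps)
  qed
qed

definition ysol :: "'v \<Rightarrow> real \<Rightarrow> real \<Rightarrow> 'v" where
  "ysol x0 t0 t = x0 + (\<Sum>i. pic x0 t0 (Suc i) t - pic x0 t0 i t)"

lemma pic_unif:
  assumes R: "R > 0"
  shows "uniform_limit {t0-R..t0+R} (pic x0 t0) (ysol x0 t0) sequentially"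
proof -
  have cc: "continuous_on {t0-R..t0+R} (\<lambda>t. pic x0 t0 (Suc 0) t - pic x0 t0 0 t)"
    using pic_cont_deriv[of x0 t0 "Suc 0"] pic_cont_deriv[of x0 t0 0]
    by (intro continuous_intros) (auto intro: continuous_on_subset)
  obtain B where B: "\<And>t. t \<in> {t0-R..t0+R} \<Longrightarrow> norm (pic x0 t0 (Suc 0) t - pic x0 t0 0 t) \<le> B"
    using compact_imp_bounded[OF compact_continuous_image[OF cc compact_Icc]]
    unfolding bounded_iff by (meson image_eqI)
  define C where "C = Lm (t0+R) - Lm (t0-R)"
  have B0: "B \<ge> 0" using B[of t0] R by (auto intro: order_trans[OF norm_ge_zero])
  have Cb: "\<bar>Lm t - Lm t0\<bar> \<le> C" if "t \<in> {t0-R..t0+R}" for t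
    using that Lm_mono[of t "t0+R"] Lm_mono[of "t0-R" t] Lm_mono[of t0 "t0+R"] Lm_mono[of "t0-R" t0] R
    by (auto simp: C_def)
  have ul: "uniform_limit {t0-R..t0+R} (\<lambda>n t. \<Sum>i<n. pic x0 t0 (Suc i) t - pic x0 t0 i t)
     (\<lambda>t. \<Sum>i. pic x0 t0 (Suc i) t - pic x0 t0 i t) sequentially"
  proof (rule Weierstrass_m_test[where M="\<lambda>i. B * (inverse (fact i) * C ^ i)"])
    show "norm (pic x0 t0 (Suc i) t - pic x0 t0 i t) \<le> B * (inverse (fact i) * C ^ i)"
      if "t \<in> {t0-R..t0+R}" for i t
    proof -
      have "norm (pic x0 t0 (Suc i) t - pic x0 t0 i t) \<le> B * \<bar>Lm t - Lm t0\<bar> ^ i / fact i"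
        by (rule pic_step_bound[OF R B that])
      also have "\<dots> \<le> B * C ^ i / fact i"
        using Cb[OF that] B0 by (intro divide_right_mono mult_left_mono power_mono) auto
      finally show ?thesis by (simp add: field_simps)
    qed
    show "summable (\<lambda>i. B * (inverse (fact i) * C ^ i))"
      by (intro summable_mult summable_exp)
  qed
  show ?thesis
  proof (rule uniform_limitI)
    fix e :: real assume "e > 0"
    from uniform_limitD[OF ul this]
    show "\<forall>\<^sub>F n in sequentially. \<forall>t\<in>{t0-R..t0+R}. dist (pic x0 t0 n t) (ysol x0 t0 t) < e"
    proof eventually_elim
      case (elim n)
      show ?case
      proof
        fix t assume t: "t \<in> {t0-R..t0+R}"
        have "pic x0 t0 n t = x0 + (\<Sum>i<n. pic x0 t0 (Suc i) t - pic x0 t0 i t)"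
          by (subst sum_lessThan_telescope) (simp add: picard.simps)
        then show "dist (pic x0 t0 n t) (ysol x0 t0 t) < e"
          using elim t by (simp add: ysol_def dist_norm)
      qed
    qed
  qed
qed

lemma ysol_cont: "continuous_on UNIV (ysol x0 t0)"
proof (intro continuous_at_imp_continuous_on ballI)
  fix t :: real
  define R where "R = \<bar>t - t0\<bar> + 1"
  have R: "R > 0" by (simp add: R_def)
  have "continuous_on {t0-R..t0+R} (ysol x0 t0)"
    by (rule uniform_limit_theorem[OF _ pic_unif[OF R]])
       (auto intro!: always_eventually allI continuous_on_subset[OF conjunct1[OF pic_cont_deriv]])
  moreover have "t \<in> interior {t0-R..t0+R}" by (auto simp: R_def)
  ultimately show "isCont (ysol x0 t0) t" by (rule continuous_on_interior)
qed

lemma ysol_eq: "ysol x0 t0 t = x0 + prim (\<lambda>\<sigma>. F \<sigma> (ysol x0 t0 \<sigma>)) t0 t"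
proof -
  define R where "R = \<bar>t - t0\<bar> + 1"
  have R: "R > 0" by (simp add: R_def)
  have t: "t \<in> {t0-R..t0+R}" by (auto simp: R_def)
  define Y where "Y u = x0 + prim (\<lambda>\<sigma>. F \<sigma> (ysol x0 t0 \<sigma>)) t0 u" for u
  have Yd: "(Y has_vector_derivative F u (ysol x0 t0 u)) (at u)" for u
    unfolding Y_def by (auto intro!: derivative_eq_intros prim_deriv Fcomp_cont ysol_cont)
  have l1: "(\<lambda>n. pic x0 t0 (Suc n) t) \<longlonglongrightarrow> ysol x0 t0 t"
    using tendsto_uniform_limitI[OF pic_unif[OF R] t] by (rule LIMSEQ_Suc)
  have l2: "(\<lambda>n. pic x0 t0 (Suc n) t) \<longlonglongrightarrow> Y t"
  proof (rule tendstoI)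
    fix e :: real assume e: "e > 0"
    define C where "C = \<bar>Lm t - Lm t0\<bar> + 1"
    have C: "C > 0" unfolding C_def by (smt (verit) abs_ge_zero)
    have "\<forall>\<^sub>F n in sequentially. \<forall>u\<in>{t0-R..t0+R}. dist (pic x0 t0 n u) (ysol x0 t0 u) < e / C"
      using uniform_limitD[OF pic_unif[OF R]] e C by simp
    then show "\<forall>\<^sub>F n in sequentially. dist (pic x0 t0 (Suc n) t) (Y t) < e"
    proof eventually_elim
      case (elim n)
      define G where "G u = pic x0 t0 (Suc n) u - Y u" for u
      have Gd: "(G has_vector_derivative F u (pic x0 t0 n u) - F u (ysol x0 t0 u)) (at u)" for u
        unfolding G_def using pic_cont_deriv Yd by (intro derivative_intros) auto
      have G0: "G t0 = 0" by (simp add: G_def pic_t0 Y_def)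
      have gb: "norm (F u (pic x0 t0 n u) - F u (ysol x0 t0 u)) \<le> e / C * lm u"
        if "u \<in> {t0-R..t0+R}" for u
      proof -
        have "norm (F u (pic x0 t0 n u) - F u (ysol x0 t0 u)) \<le> lm u * norm (pic x0 t0 n u - ysol x0 t0 u)"
          by (rule lip)
        also have "\<dots> \<le> lm u * (e / C)"
        proof -
          have "norm (pic x0 t0 n u - ysol x0 t0 u) < e / C" using elim that by (auto simp: dist_norm)
          then show ?thesis by (intro mult_left_mono lm_nn) auto
        qed
        finally show ?thesis by (simp only: mult.commute)
      qed
      have Ld: "((\<lambda>u. e / C * Lm u) has_real_derivative e / C * lm u) (at u)" for u
        by (rule DERIV_cmult[OF Lm_deriv])
      have "norm (G t) \<le> e / C * \<bar>Lm t - Lm t0\<bar>"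
      proof (cases "t0 \<le> t")
        case True
        have "norm (G t - G t0) \<le> e / C * Lm t - e / C * Lm t0"
          by (rule dbound[OF True Gd Ld]) (use gb True t R in auto)
        then show ?thesis using G0 Lm_mono[OF True] e C by (simp add: right_diff_distrib)
      next
        case False
        have "norm (G t0 - G t) \<le> e / C * Lm t0 - e / C * Lm t"
          by (rule dbound[OF _ Gd Ld]) (use gb False t R in auto)
        then show ?thesis using G0 Lm_mono[of t t0] False e C by (simp add: right_diff_distrib)
      qed
      also have "\<dots> < e"
      proof -
        have "e / C * \<bar>Lm t - Lm t0\<bar> < e / C * C"
          using e C by (intro mult_strict_left_mono) (auto simp: C_def)
        then show ?thesis using C by simp
      qed
      finally show ?case by (simp add: G_def dist_norm)
    qed
  qed
  from LIMSEQ_unique[OF l1 l2] show ?thesis by (simp add: Y_def)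
qed

lemma ysol_deriv: "(ysol x0 t0 has_vector_derivative F t (ysol x0 t0 t)) (at t)"
proof -
  have "((\<lambda>u. x0 + prim (\<lambda>\<sigma>. F \<sigma> (ysol x0 t0 \<sigma>)) t0 u) has_vector_derivative F t (ysol x0 t0 t)) (at t)"
    by (auto intro!: derivative_eq_intros prim_deriv Fcomp_cont ysol_cont)
  then show ?thesis by (subst ysol_eq[abs_def]) simp
qed

lemma ysol_init: "ysol x0 t0 t0 = x0"
  by (subst ysol_eq) simp

lemma exists_sol: "\<exists>y. y t0 = x0 \<and> (\<forall>t. (y has_vector_derivative F t (y t)) (at t))"
  using ysol_init ysol_deriv by blast

end



lemma gr_pos: "growth_rate u \<Longrightarrow> u t > 0" by (simp add: growth_rate_def)
lemma gr_mono: "growth_rate u \<Longrightarrow> s \<le> t \<Longrightarrow> u s \<le> u t"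
  by (auto simp: growth_rate_def dest: strict_mono_mono monoD)
lemma gr_ge1: "growth_rate u \<Longrightarrow> u \<bar>t\<bar> \<ge> 1"
  using gr_mono[of u 0 "\<bar>t\<bar>"] by (simp add: growth_rate_def)
lemma gr_0: "growth_rate u \<Longrightarrow> u 0 = 1" by (simp add: growth_rate_def)
lemma gr_top: "growth_rate u \<Longrightarrow> filterlim u at_top at_top" by (simp add: growth_rate_def)
lemma gr_bot: "growth_rate u \<Longrightarrow> (u \<longlongrightarrow> 0) at_bot" by (simp add: growth_rate_def)
lemma gr_deriv_nn:
  assumes "growth_rate u" "(u has_real_derivative d) (at t)"
  shows "d \<ge> 0"
proof (rule ccontr)
  assume "\<not> d \<ge> 0"
  then obtain e where "e > 0" "\<forall>h>0. h < e \<longrightarrow> u t > u (t + h)"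
    using DERIV_neg_dec_right[OF assms(2)] by force
  then have "u t > u (t + e/2)" by auto
  moreover have "u t \<le> u (t + e/2)" using gr_mono[OF assms(1)] \<open>e > 0\<close> by auto
  ultimately show False by simp
qed

lemma blinfun_compose_diff_right: "A o\<^sub>L (U - V) = (A o\<^sub>L U) - (A o\<^sub>L V)"
  by (rule blinfun_eqI) (simp add: blinfun.bilinear_simps)
lemma blinfun_compose_diff_left: "(U - V) o\<^sub>L A = (U o\<^sub>L A) - (V o\<^sub>L A)"
  by (rule blinfun_eqI) (simp add: blinfun.bilinear_simps)
lemma blinfun_compose_add_left: "(U + V) o\<^sub>L A = (U o\<^sub>L A) + (V o\<^sub>L A)"
  by (rule blinfun_eqI) (simp add: blinfun.bilinear_simps)
lemma blinfun_compose_add_right: "A o\<^sub>L (U + V) = (A o\<^sub>L U) + (A o\<^sub>L V)"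
  by (rule blinfun_eqI) (simp add: blinfun.bilinear_simps)
lemma blinfun_compose_id_left[simp]: "id_blinfun o\<^sub>L U = U"
  by (rule blinfun_eqI) simp
lemma blinfun_compose_id_right[simp]: "U o\<^sub>L id_blinfun = U"
  by (rule blinfun_eqI) simp
lemma blinfun_compose_assoc: "(U o\<^sub>L V) o\<^sub>L W = U o\<^sub>L (V o\<^sub>L W)"
  by (rule blinfun_eqI) simp
lemma blinfun_compose_uminus_left: "(- U) o\<^sub>L V = - (U o\<^sub>L V)"
  by (rule blinfun_eqI) (simp add: blinfun.bilinear_simps)

locale thm10 =
  fixes A :: "real \<Rightarrow> ('a::banach \<Rightarrow>\<^sub>L 'a)"
    and T :: "real \<Rightarrow> real \<Rightarrow> ('a \<Rightarrow>\<^sub>L 'a)"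
    and f :: "real \<Rightarrow> 'a \<Rightarrow> 'a"
    and h k \<mu> \<nu> h' k' :: "real \<Rightarrow> real"
    and a b \<epsilon> K \<alpha> \<gamma> :: real
  assumes A_cont: "continuous_on UNIV A"
    and T_evol: "evolution_op A T"
    and gr: "growth_rate h" "growth_rate k" "growth_rate \<mu>" "growth_rate \<nu>"
    and h_deriv: "\<And>t. (h has_real_derivative h' t) (at t)"
    and k_deriv: "\<And>t. (k has_real_derivative k' t) (at t)"
    and dich: "nonuniform_dichotomy T h k \<mu> \<nu> a b \<epsilon> K"
    and b_pos: "b > 0"
    and f_cont: "continuous_on UNIV (\<lambda>(t, x). f t x)"
    and \<alpha>_pos: "\<alpha> > 0" and \<gamma>_pos: "\<gamma> > 0"
    and f_bound: "\<And>t x. norm (f t x) \<le>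
       \<alpha> * min (h' t / h t * \<mu> \<bar>t\<bar> powr (- \<epsilon>)) (k' t / k t * \<nu> \<bar>t\<bar> powr (- \<epsilon>))"
    and f_lip: "\<And>t x1 x2. norm (f t x1 - f t x2) \<le>
       \<gamma> * min (h' t / h t * \<mu> \<bar>t\<bar> powr (- \<epsilon>)) (k' t / k t * \<nu> \<bar>t\<bar> powr (- \<epsilon>))
         * norm (x1 - x2)"
    and small: "K * \<gamma> * (1 / \<bar>a\<bar> + 1 / b) < 1"
begin

lemma a_neg: "a < 0" and eps_nn: "\<epsilon> \<ge> 0" and K_pos: "K > 0"
  using dich by (auto simp: nonuniform_dichotomy_def)

definition P where "P = (SOME P :: real \<Rightarrow> ('a \<Rightarrow>\<^sub>L 'a).
        (\<forall>t. P t o\<^sub>L P t = P t) \<and>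
        (\<forall>t s. P t o\<^sub>L T t s = T t s o\<^sub>L P s) \<and>
        (\<forall>t s. t \<ge> s \<longrightarrow>
           norm (T t s o\<^sub>L P s) \<le> K * (h t / h s) powr a * \<mu> \<bar>s\<bar> powr \<epsilon>) \<and>
        (\<forall>t s. s \<ge> t \<longrightarrow>
           norm (T t s o\<^sub>L (id_blinfun - P s)) \<le> K * (k s / k t) powr (- b) * \<nu> \<bar>s\<bar> powr \<epsilon>))"

lemma P_props:
  "\<And>t. P t o\<^sub>L P t = P t"
  "\<And>t s. P t o\<^sub>L T t s = T t s o\<^sub>L P s"
  "\<And>t s. t \<ge> s \<Longrightarrow> norm (T t s o\<^sub>L P s) \<le> K * (h t / h s) powr a * \<mu> \<bar>s\<bar> powr \<epsilon>"
  "\<And>t s. s \<ge> t \<Longrightarrow> norm (T t s o\<^sub>L (id_blinfun - P s)) \<le> K * (k s / k t) powr (- b) * \<nu> \<bar>s\<bar> powr \<epsilon>"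
proof -
  have ex: "\<exists>P :: real \<Rightarrow> ('a \<Rightarrow>\<^sub>L 'a).
        (\<forall>t. P t o\<^sub>L P t = P t) \<and>
        (\<forall>t s. P t o\<^sub>L T t s = T t s o\<^sub>L P s) \<and>
        (\<forall>t s. t \<ge> s \<longrightarrow>
           norm (T t s o\<^sub>L P s) \<le> K * (h t / h s) powr a * \<mu> \<bar>s\<bar> powr \<epsilon>) \<and>
        (\<forall>t s. s \<ge> t \<longrightarrow>
           norm (T t s o\<^sub>L (id_blinfun - P s)) \<le> K * (k s / k t) powr (- b) * \<nu> \<bar>s\<bar> powr \<epsilon>)"
    using dich by (simp add: nonuniform_dichotomy_def)
  note s = someI_ex[OF ex, folded P_def]
  show "\<And>t. P t o\<^sub>L P t = P t"
    "\<And>t s. P t o\<^sub>L T t s = T t s o\<^sub>L P s"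
    "\<And>t s. t \<ge> s \<Longrightarrow> norm (T t s o\<^sub>L P s) \<le> K * (h t / h s) powr a * \<mu> \<bar>s\<bar> powr \<epsilon>"
    "\<And>t s. s \<ge> t \<Longrightarrow> norm (T t s o\<^sub>L (id_blinfun - P s)) \<le> K * (k s / k t) powr (- b) * \<nu> \<bar>s\<bar> powr \<epsilon>"
    using s by blast+
qed

definition LA where "LA t = prim (\<lambda>s. norm (A s)) 0 t"

lemma LA_deriv: "(LA has_real_derivative norm (A t)) (at t)"
proof -
  have "continuous_on UNIV (\<lambda>s. norm (A s))" by (intro continuous_intros A_cont)
  then show ?thesis unfolding LA_def has_real_derivative_iff_has_vector_derivative
    by (rule prim_deriv)
qed

lemma A_cont_pair: "continuous_on UNIV (\<lambda>(t, U). A t o\<^sub>L U)"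
  using A_cont by (auto simp: case_prod_unfold intro!: continuous_intros continuous_on_compose2[of UNIV A])
lemma A_cont_pair2: "continuous_on UNIV (\<lambda>(t, U). U o\<^sub>L A t)"
  using A_cont by (auto simp: case_prod_unfold intro!: continuous_intros continuous_on_compose2[of UNIV A])

lemma lode_U: "lode (\<lambda>t U. A t o\<^sub>L U) LA (\<lambda>t. norm (A t))"
proof
  show "continuous_on UNIV (\<lambda>(t, U). A t o\<^sub>L U)" by (rule A_cont_pair)
  show "(LA has_real_derivative norm (A t)) (at t)" for t by (rule LA_deriv)
  show "0 \<le> norm (A t)" for t by simp
  show "norm ((A t o\<^sub>L x) - (A t o\<^sub>L y)) \<le> norm (A t) * norm (x - y)" for t x y
    using norm_blinfun_compose[of "A t" "x - y"] by (simp add: blinfun_compose_diff_right)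
qed

lemma lode_V: "lode (\<lambda>t V. - (V o\<^sub>L A t)) LA (\<lambda>t. norm (A t))"
proof
  show "continuous_on UNIV (\<lambda>(t, V). - (V o\<^sub>L A t))"
    using A_cont_pair2 unfolding case_prod_unfold by (rule continuous_on_minus)
  show "(LA has_real_derivative norm (A t)) (at t)" for t by (rule LA_deriv)
  show "0 \<le> norm (A t)" for t by simp
  show "norm (- (x o\<^sub>L A t) - - (y o\<^sub>L A t)) \<le> norm (A t) * norm (x - y)" for t x y
  proof -
    have "- (x o\<^sub>L A t) - - (y o\<^sub>L A t) = - ((x - y) o\<^sub>L A t)"
      by (simp add: blinfun_compose_diff_left)
    then show ?thesis using norm_blinfun_compose[of "x - y" "A t"] by (simp add: mult.commute)
  qed
qed

lemma lode_W: "lode (\<lambda>t W. (A t o\<^sub>L W) - (W o\<^sub>L A t)) (\<lambda>t. 2 * LA t) (\<lambda>t. 2 * norm (A t))"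
proof
  show "continuous_on UNIV (\<lambda>(t, W). (A t o\<^sub>L W) - (W o\<^sub>L A t))"
    using A_cont_pair A_cont_pair2 unfolding case_prod_unfold by (rule continuous_on_diff)
  show "((\<lambda>t. 2 * LA t) has_real_derivative 2 * norm (A t)) (at t)" for t
    by (intro DERIV_cmult LA_deriv)
  show "0 \<le> 2 * norm (A t)" for t by simp
  show "norm ((A t o\<^sub>L x) - (x o\<^sub>L A t) - ((A t o\<^sub>L y) - (y o\<^sub>L A t))) \<le> 2 * norm (A t) * norm (x - y)" for t x y
  proof -
    have "(A t o\<^sub>L x) - (x o\<^sub>L A t) - ((A t o\<^sub>L y) - (y o\<^sub>L A t)) = (A t o\<^sub>L (x - y)) - ((x - y) o\<^sub>L A t)"
      by (simp add: blinfun_compose_diff_right blinfun_compose_diff_left)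
    also have "norm \<dots> \<le> norm (A t o\<^sub>L (x - y)) + norm ((x - y) o\<^sub>L A t)" by (rule norm_triangle_ineq4)
    also have "\<dots> \<le> norm (A t) * norm (x - y) + norm (x - y) * norm (A t)"
      by (intro add_mono norm_blinfun_compose)
    finally show ?thesis by simp
  qed
qed

lemma lode_Z: "lode (\<lambda>t (W::'a \<Rightarrow>\<^sub>L 'a). 0) (\<lambda>t. 0) (\<lambda>t. 0)"
proof
  show "continuous_on UNIV (\<lambda>(t, W::'a \<Rightarrow>\<^sub>L 'a). 0::'a \<Rightarrow>\<^sub>L 'a)"
    by (simp add: case_prod_unfold)
qed auto

definition U where "U = (SOME y. y 0 = id_blinfun \<and> (\<forall>t. (y has_vector_derivative A t o\<^sub>L y t) (at t)))"
definition V where "V = (SOME y. y 0 = id_blinfun \<and> (\<forall>t. (y has_vector_derivative - (y t o\<^sub>L A t)) (at t)))"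

lemma U_props: "U 0 = id_blinfun" "\<And>t. (U has_vector_derivative A t o\<^sub>L U t) (at t)"
  using someI_ex[OF lode.exists_sol[OF lode_U, of 0 id_blinfun], folded U_def] by auto
lemma V_props: "V 0 = id_blinfun" "\<And>t. (V has_vector_derivative - (V t o\<^sub>L A t)) (at t)"
  using someI_ex[OF lode.exists_sol[OF lode_V, of 0 id_blinfun], folded V_def] by auto

lemma VU: "V t o\<^sub>L U t = id_blinfun"
proof -
  have "(\<lambda>t. V t o\<^sub>L U t) = (\<lambda>t. id_blinfun)"
  proof (rule lode.unique[OF lode_Z, of _ _ 0])
    show "((\<lambda>t. V t o\<^sub>L U t) has_vector_derivative 0) (at t)" for t
    proof -
      have "((\<lambda>t. V t o\<^sub>L U t) has_vector_derivative (V t o\<^sub>L (A t o\<^sub>L U t)) + ((- (V t o\<^sub>L A t)) o\<^sub>L U t)) (at t)"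
        by (rule bounded_bilinear.has_vector_derivative[OF bounded_bilinear_blinfun_compose V_props(2) U_props(2)])
      moreover have "(V t o\<^sub>L (A t o\<^sub>L U t)) + ((- (V t o\<^sub>L A t)) o\<^sub>L U t) = 0"
        by (simp add: blinfun_compose_uminus_left blinfun_compose_assoc)
      ultimately show ?thesis by simp
    qed
  qed (auto simp: U_props V_props)
  then show ?thesis by (rule fun_cong)
qed

lemma UV: "U t o\<^sub>L V t = id_blinfun"
proof -
  have "(\<lambda>t. U t o\<^sub>L V t) = (\<lambda>t. id_blinfun)"
  proof (rule lode.unique[OF lode_W, of _ _ 0])
    show "((\<lambda>t. U t o\<^sub>L V t) has_vector_derivative (A t o\<^sub>L (U t o\<^sub>L V t)) - ((U t o\<^sub>L V t) o\<^sub>L A t)) (at t)" for t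
    proof -
      have "((\<lambda>t. U t o\<^sub>L V t) has_vector_derivative (U t o\<^sub>L (- (V t o\<^sub>L A t))) + ((A t o\<^sub>L U t) o\<^sub>L V t)) (at t)"
        by (rule bounded_bilinear.has_vector_derivative[OF bounded_bilinear_blinfun_compose U_props(2) V_props(2)])
      moreover have "(U t o\<^sub>L (- (V t o\<^sub>L A t))) + ((A t o\<^sub>L U t) o\<^sub>L V t) = (A t o\<^sub>L (U t o\<^sub>L V t)) - ((U t o\<^sub>L V t) o\<^sub>L A t)"
        by (rule blinfun_eqI) (simp add: blinfun.bilinear_simps)
      ultimately show ?thesis by simp
    qed
    show "((\<lambda>t. id_blinfun) has_vector_derivative (A t o\<^sub>L id_blinfun) - (id_blinfun o\<^sub>L A t)) (at t)" for t
      by simp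
  qed (auto simp: U_props V_props)
  then show ?thesis by (rule fun_cong)
qed

lemma lin_sol: "((\<lambda>\<tau>. U \<tau> w) has_vector_derivative A t (U t w)) (at t)"
proof -
  have "((\<lambda>\<tau>. U \<tau> w) has_vector_derivative (A t o\<^sub>L U t) w) (at t)"
    using bounded_bilinear.has_vector_derivative[OF bounded_bilinear_blinfun_apply U_props(2)[of t],
        of "\<lambda>_. w" 0] by simp
  then show ?thesis by simp
qed

lemma T_eq: "T t s = U t o\<^sub>L V s"
proof (rule blinfun_eqI)
  fix v
  define x where "x \<tau> = U \<tau> (V s v)" for \<tau>
  have "solves (\<lambda>t y. A t y) x" unfolding solves_def x_def by (auto intro: lin_sol)
  then have "T t s (x s) = x t" using T_evol by (auto simp: evolution_op_def)
  moreover have "x s = v" unfolding x_def using UV[of s] by (metis blinfun_apply_blinfun_compose blinfun_apply_id_blinfun)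
  ultimately show "T t s v = (U t o\<^sub>L V s) v" by (simp add: x_def)
qed

lemma U_cont: "continuous_on S U"
  using U_props(2) by (intro continuous_at_imp_continuous_on ballI has_vector_derivative_continuous) auto
lemma V_cont: "continuous_on S V"
  using V_props(2) by (intro continuous_at_imp_continuous_on ballI has_vector_derivative_continuous) auto

end



lemma blin_vd: "(g has_vector_derivative g') F \<Longrightarrow> ((\<lambda>x. blinfun_apply X (g x)) has_vector_derivative X g') F"
  by (rule bounded_linear.has_vector_derivative[OF blinfun.bounded_linear_right])

lemma powr_weight:
  fixes x y d a :: real
  assumes "x > 0" "y > 0"
  shows "(x / y) powr a * (d / y) = x powr a * y powr (- a - 1) * d"
  using assms by (simp add: powr_divide powr_diff powr_minus divide_simps)

context thm10 begin

definition m where "m \<sigma> = min (h' \<sigma> / h \<sigma> * \<mu> \<bar>\<sigma>\<bar> powr (- \<epsilon>)) (k' \<sigma> / k \<sigma> * \<nu> \<bar>\<sigma>\<bar> powr (- \<epsilon>))"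
definition P0 where "P0 = P 0"

lemma hpos: "h t > 0" and kpos: "k t > 0" and mupos: "\<mu> t > 0" and nupos: "\<nu> t > 0"
  using gr by (auto simp: gr_pos)

lemma h'_nn: "h' t \<ge> 0" using gr_deriv_nn[OF gr(1) h_deriv] .
lemma k'_nn: "k' t \<ge> 0" using gr_deriv_nn[OF gr(2) k_deriv] .

lemma m_nn: "m t \<ge> 0"
  using h'_nn[of t] k'_nn[of t] hpos[of t] kpos[of t] by (simp add: m_def)

lemma m_le_h: "m t \<le> h' t / h t * \<mu> \<bar>t\<bar> powr (- \<epsilon>)" by (simp add: m_def)
lemma m_le_k: "m t \<le> k' t / k t * \<nu> \<bar>t\<bar> powr (- \<epsilon>)" by (simp add: m_def)

lemma U0: "U 0 = id_blinfun" by (rule U_props(1))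
lemma V0: "V 0 = id_blinfun" by (rule V_props(1))

lemma PV: "P0 o\<^sub>L V s = V s o\<^sub>L P s"
  using P_props(2)[of 0 s] by (simp add: T_eq U0 P0_def)

lemma UPV: "U t (P0 (V s w)) = (T t s o\<^sub>L P s) w"
proof -
  have "P0 (V s w) = V s (P s w)" using PV by (metis blinfun_apply_blinfun_compose)
  then show ?thesis by (simp add: T_eq)
qed

lemma UQV: "U t ((id_blinfun - P0) (V s w)) = (T t s o\<^sub>L (id_blinfun - P s)) w"
  using UPV[of t s w] by (simp add: blinfun.bilinear_simps T_eq)

lemma P_est:
  assumes G: "\<And>\<sigma>. c \<le> \<sigma> \<Longrightarrow> \<sigma> \<le> d \<Longrightarrow> (G has_vector_derivative P0 (V \<sigma> (w \<sigma>))) (at \<sigma>)"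
    and w: "\<And>\<sigma>. c \<le> \<sigma> \<Longrightarrow> \<sigma> \<le> d \<Longrightarrow> norm (w \<sigma>) \<le> \<beta> * m \<sigma>"
    and cd: "c \<le> d" "d \<le> \<tau>" and \<beta>: "\<beta> \<ge> 0"
  shows "norm (U \<tau> (G d) - U \<tau> (G c)) \<le> K * \<beta> / (- a) * h \<tau> powr a * (h d powr (- a) - h c powr (- a))"
proof -
  have "norm (U \<tau> (G d) - U \<tau> (G c)) \<le>
     K * \<beta> / (- a) * h \<tau> powr a * h d powr (- a) - K * \<beta> / (- a) * h \<tau> powr a * h c powr (- a)"
  proof (rule dbound[OF cd(1), where g="\<lambda>\<sigma>. U \<tau> (P0 (V \<sigma> (w \<sigma>)))"
        and \<phi>="\<lambda>\<sigma>. K * \<beta> * h \<tau> powr a * h \<sigma> powr (- a - 1) * h' \<sigma>"])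
    show "((\<lambda>u. U \<tau> (G u)) has_vector_derivative U \<tau> (P0 (V u (w u)))) (at u)" if "c \<le> u" "u \<le> d" for u
      using G[OF that] by (rule blin_vd)
    show "((\<lambda>\<sigma>. K * \<beta> / (- a) * h \<tau> powr a * h \<sigma> powr (- a)) has_real_derivative
        K * \<beta> * h \<tau> powr a * h u powr (- a - 1) * h' u) (at u)" for u
    proof -
      have "((\<lambda>\<sigma>. K * \<beta> / (- a) * h \<tau> powr a * h \<sigma> powr (- a)) has_real_derivative
        K * \<beta> / (- a) * h \<tau> powr a * ((- a) * h u powr (- a - of_nat 1) * h' u)) (at u)"
        by (intro DERIV_cmult DERIV_fun_powr h_deriv hpos)
      then show ?thesis by (rule DERIV_cong) (use a_neg in \<open>simp add: field_simps\<close>)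
    qed
    show "norm (U \<tau> (P0 (V u (w u)))) \<le> K * \<beta> * h \<tau> powr a * h u powr (- a - 1) * h' u"
      if u: "c \<le> u" "u \<le> d" for u
    proof -
      have "norm (U \<tau> (P0 (V u (w u)))) \<le> norm (T \<tau> u o\<^sub>L P u) * norm (w u)"
        unfolding UPV by (rule norm_blinfun)
      also have "\<dots> \<le> (K * (h \<tau> / h u) powr a * \<mu> \<bar>u\<bar> powr \<epsilon>) * (\<beta> * (h' u / h u * \<mu> \<bar>u\<bar> powr (- \<epsilon>)))"
      proof (rule mult_mono)
        show "norm (T \<tau> u o\<^sub>L P u) \<le> K * (h \<tau> / h u) powr a * \<mu> \<bar>u\<bar> powr \<epsilon>"
          using P_props(3) u cd by auto
        show "norm (w u) \<le> \<beta> * (h' u / h u * \<mu> \<bar>u\<bar> powr (- \<epsilon>))"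
          using w[OF u] m_le_h[of u] \<beta> by (meson mult_left_mono order_trans)
        show "0 \<le> K * (h \<tau> / h u) powr a * \<mu> \<bar>u\<bar> powr \<epsilon>" using K_pos by simp
      qed simp
      also have "\<dots> = K * \<beta> * ((h \<tau> / h u) powr a * (h' u / h u)) * (\<mu> \<bar>u\<bar> powr \<epsilon> * \<mu> \<bar>u\<bar> powr (- \<epsilon>))"
        by (simp add: mult_ac)
      also have "\<mu> \<bar>u\<bar> powr \<epsilon> * \<mu> \<bar>u\<bar> powr (- \<epsilon>) = 1"
        using mupos[of "\<bar>u\<bar>"] by (simp add: powr_minus)
      also have "(h \<tau> / h u) powr a * (h' u / h u) = h \<tau> powr a * h u powr (- a - 1) * h' u"
        by (rule powr_weight[OF hpos hpos])
      finally show ?thesis by (simp add: mult_ac)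
    qed
  qed
  then show ?thesis by (simp add: right_diff_distrib)
qed

lemma Q_est:
  assumes G: "\<And>\<sigma>. c \<le> \<sigma> \<Longrightarrow> \<sigma> \<le> d \<Longrightarrow> (G has_vector_derivative (id_blinfun - P0) (V \<sigma> (w \<sigma>))) (at \<sigma>)"
    and w: "\<And>\<sigma>. c \<le> \<sigma> \<Longrightarrow> \<sigma> \<le> d \<Longrightarrow> norm (w \<sigma>) \<le> \<beta> * m \<sigma>"
    and cd: "c \<le> d" "\<tau> \<le> c" and \<beta>: "\<beta> \<ge> 0"
  shows "norm (U \<tau> (G d) - U \<tau> (G c)) \<le> K * \<beta> / b * k \<tau> powr b * (k c powr (- b) - k d powr (- b))"
proof -
  have "norm (U \<tau> (G d) - U \<tau> (G c)) \<le>
     - K * \<beta> / b * k \<tau> powr b * k d powr (- b) - - K * \<beta> / b * k \<tau> powr b * k c powr (- b)"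
  proof (rule dbound[OF cd(1), where g="\<lambda>\<sigma>. U \<tau> ((id_blinfun - P0) (V \<sigma> (w \<sigma>)))"
        and \<phi>="\<lambda>\<sigma>. K * \<beta> * k \<tau> powr b * k \<sigma> powr (- b - 1) * k' \<sigma>"])
    show "((\<lambda>u. U \<tau> (G u)) has_vector_derivative U \<tau> ((id_blinfun - P0) (V u (w u)))) (at u)" if "c \<le> u" "u \<le> d" for u
      using G[OF that] by (rule blin_vd)
    show "((\<lambda>\<sigma>. - K * \<beta> / b * k \<tau> powr b * k \<sigma> powr (- b)) has_real_derivative
        K * \<beta> * k \<tau> powr b * k u powr (- b - 1) * k' u) (at u)" for u
    proof -
      have "((\<lambda>\<sigma>. - K * \<beta> / b * k \<tau> powr b * k \<sigma> powr (- b)) has_real_derivative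
        - K * \<beta> / b * k \<tau> powr b * ((- b) * k u powr (- b - of_nat 1) * k' u)) (at u)"
        by (intro DERIV_cmult DERIV_fun_powr k_deriv kpos)
      then show ?thesis by (rule DERIV_cong) (use b_pos in \<open>simp add: field_simps\<close>)
    qed
    show "norm (U \<tau> ((id_blinfun - P0) (V u (w u)))) \<le> K * \<beta> * k \<tau> powr b * k u powr (- b - 1) * k' u"
      if u: "c \<le> u" "u \<le> d" for u
    proof -
      have "norm (U \<tau> ((id_blinfun - P0) (V u (w u)))) \<le> norm (T \<tau> u o\<^sub>L (id_blinfun - P u)) * norm (w u)"
        unfolding UQV by (rule norm_blinfun)
      also have "\<dots> \<le> (K * (k u / k \<tau>) powr (- b) * \<nu> \<bar>u\<bar> powr \<epsilon>) * (\<beta> * (k' u / k u * \<nu> \<bar>u\<bar> powr (- \<epsilon>)))"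
      proof (rule mult_mono)
        show "norm (T \<tau> u o\<^sub>L (id_blinfun - P u)) \<le> K * (k u / k \<tau>) powr (- b) * \<nu> \<bar>u\<bar> powr \<epsilon>"
          using P_props(4) u cd by auto
        show "norm (w u) \<le> \<beta> * (k' u / k u * \<nu> \<bar>u\<bar> powr (- \<epsilon>))"
          using w[OF u] m_le_k[of u] \<beta> by (meson mult_left_mono order_trans)
        show "0 \<le> K * (k u / k \<tau>) powr (- b) * \<nu> \<bar>u\<bar> powr \<epsilon>" using K_pos by simp
      qed simp
      also have "\<dots> = K * \<beta> * ((k \<tau> / k u) powr b * (k' u / k u)) * (\<nu> \<bar>u\<bar> powr \<epsilon> * \<nu> \<bar>u\<bar> powr (- \<epsilon>))"
      proof -
        have "(k u / k \<tau>) powr (- b) = (k \<tau> / k u) powr b"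
          using kpos[of u] kpos[of \<tau>] by (simp add: powr_minus powr_divide)
        then show ?thesis by (simp add: mult_ac)
      qed
      also have "\<nu> \<bar>u\<bar> powr \<epsilon> * \<nu> \<bar>u\<bar> powr (- \<epsilon>) = 1"
        using nupos[of "\<bar>u\<bar>"] by (simp add: powr_minus)
      also have "(k \<tau> / k u) powr b * (k' u / k u) = k \<tau> powr b * k u powr (- b - 1) * k' u"
        by (rule powr_weight[OF kpos kpos])
      finally show ?thesis by (simp add: mult_ac)
    qed
  qed
  then show ?thesis by (simp add: right_diff_distrib)
qed

end



lemma cauchy_bound:
  fixes x :: "nat \<Rightarrow> 'a::banach"
  assumes b: "\<And>n m. n \<le> m \<Longrightarrow> norm (x m - x n) \<le> r n" and r: "r \<longlonglongrightarrow> 0"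
  shows "convergent x"
proof -
  have "Cauchy x"
  proof (rule metric_CauchyI)
    fix e :: real assume "e > 0"
    from LIMSEQ_D[OF r this] obtain M where M: "\<And>n. n \<ge> M \<Longrightarrow> norm (r n - 0) < e" by blast
    show "\<exists>M. \<forall>m\<ge>M. \<forall>n\<ge>M. dist (x m) (x n) < e"
    proof (intro exI allI impI)
      fix m n assume "m \<ge> M" "n \<ge> M"
      show "dist (x m) (x n) < e"
      proof (cases "n \<le> m")
        case True
        then show ?thesis using b[OF True] M[OF \<open>n \<ge> M\<close>] by (simp add: dist_norm)
      next
        case False
        then show ?thesis using b[of m n] M[OF \<open>m \<ge> M\<close>] by (simp add: dist_norm norm_minus_commute)
      qed
    qed
  qed
  then show ?thesis by (simp add: Cauchy_convergent_iff)
qed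

lemma lim_norm_bound:
  fixes x :: "nat \<Rightarrow> 'a::real_normed_vector"
  assumes "x \<longlonglongrightarrow> L" "\<forall>\<^sub>F n in sequentially. norm (x n) \<le> B"
  shows "norm L \<le> B"
  using tendsto_upperbound[OF tendsto_norm[OF assms(1)] assms(2)] by simp

context thm10 begin

definition adm where "adm u \<longleftrightarrow> continuous_on UNIV u \<and> (\<exists>\<beta>\<ge>0. \<forall>\<sigma>. norm (u \<sigma>) \<le> \<beta> * m \<sigma>)"

definition Ip where "Ip u c = prim (\<lambda>\<sigma>. P0 (V \<sigma> (u \<sigma>))) 0 c"
definition Iq where "Iq u c = prim (\<lambda>\<sigma>. (id_blinfun - P0) (V \<sigma> (u \<sigma>))) 0 c"
definition limP where "limP u = lim (\<lambda>n. Ip u (- real n))"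
definition limQ where "limQ u = lim (\<lambda>n. Iq u (real n))"
definition GP where "GP u \<tau> = U \<tau> (Ip u \<tau> - limP u)"
definition GQ where "GQ u \<tau> = U \<tau> (limQ u - Iq u \<tau>)"
definition Gr where "Gr u \<tau> = GP u \<tau> - GQ u \<tau>"

lemma Ip_deriv: "continuous_on UNIV u \<Longrightarrow> (Ip u has_vector_derivative P0 (V c (u c))) (at c)"
  unfolding Ip_def by (rule prim_deriv) (intro continuous_intros V_cont)
lemma Iq_deriv: "continuous_on UNIV u \<Longrightarrow> (Iq u has_vector_derivative (id_blinfun - P0) (V c (u c))) (at c)"
  unfolding Iq_def by (rule prim_deriv) (intro continuous_intros V_cont)

lemma hn_lim: "(\<lambda>n. h (- real n) powr (- a)) \<longlonglongrightarrow> 0"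
proof -
  have "((\<lambda>n. - real n) \<longlongrightarrow> 0) sequentially \<or> True" by simp
  have f: "filterlim (\<lambda>n. - real n) at_bot sequentially"
    by (rule filterlim_compose[OF filterlim_uminus_at_bot_at_top filterlim_real_sequentially])
  have "(\<lambda>n. h (- real n)) \<longlonglongrightarrow> 0"
    by (rule filterlim_compose[OF gr_bot[OF gr(1)] f])
  then show ?thesis
    by (rule tendsto_zero_powrI) (use a_neg hpos in \<open>auto intro!: always_eventually less_imp_le\<close>)
qed

lemma kn_lim: "(\<lambda>n. k (real n) powr (- b)) \<longlonglongrightarrow> 0"
  by (rule tendsto_neg_powr) (use b_pos in \<open>auto intro: filterlim_compose[OF gr_top[OF gr(2)] filterlim_real_sequentially]\<close>)

lemma D_deriv:
  assumes "continuous_on UNIV u1" "continuous_on UNIV u2"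
  shows "((\<lambda>c. Ip u1 c - Ip u2 c) has_vector_derivative P0 (V c (u1 c - u2 c))) (at c)"
    and "((\<lambda>c. Iq u1 c - Iq u2 c) has_vector_derivative (id_blinfun - P0) (V c (u1 c - u2 c))) (at c)"
proof -
  show "((\<lambda>c. Ip u1 c - Ip u2 c) has_vector_derivative P0 (V c (u1 c - u2 c))) (at c)"
    using has_vector_derivative_diff[OF Ip_deriv[OF assms(1)] Ip_deriv[OF assms(2)]]
    by (simp add: blinfun.bilinear_simps)
  show "((\<lambda>c. Iq u1 c - Iq u2 c) has_vector_derivative (id_blinfun - P0) (V c (u1 c - u2 c))) (at c)"
    using has_vector_derivative_diff[OF Iq_deriv[OF assms(1)] Iq_deriv[OF assms(2)]]
    by (simp add: blinfun.bilinear_simps)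
qed

lemma adm_diff_bound:
  assumes "adm u1" "adm u2"
  obtains \<beta> where "\<beta> \<ge> 0" "\<And>\<sigma>. norm (u1 \<sigma> - u2 \<sigma>) \<le> \<beta> * m \<sigma>"
proof -
  obtain \<beta>1 \<beta>2 where b: "\<beta>1 \<ge> 0" "\<beta>2 \<ge> 0" "\<And>\<sigma>. norm (u1 \<sigma>) \<le> \<beta>1 * m \<sigma>" "\<And>\<sigma>. norm (u2 \<sigma>) \<le> \<beta>2 * m \<sigma>"
    using assms by (auto simp: adm_def)
  have "norm (u1 \<sigma> - u2 \<sigma>) \<le> (\<beta>1 + \<beta>2) * m \<sigma>" for \<sigma>
    using norm_triangle_ineq4[of "u1 \<sigma>" "u2 \<sigma>"] b(3,4)[of \<sigma>] by (simp add: distrib_right)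
  then show ?thesis using that b by (meson add_nonneg_nonneg)
qed

lemma adm_zero: "adm (\<lambda>_. 0)"
  unfolding adm_def by (auto intro!: exI[of _ 0])

lemma convP_diff:
  assumes "adm u1" "adm u2"
  shows "convergent (\<lambda>n. Ip u1 (- real n) - Ip u2 (- real n))"
proof -
  obtain \<beta> where \<beta>: "\<beta> \<ge> 0" "\<And>\<sigma>. norm (u1 \<sigma> - u2 \<sigma>) \<le> \<beta> * m \<sigma>" using adm_diff_bound[OF assms] by blast
  have c: "continuous_on UNIV u1" "continuous_on UNIV u2" using assms by (auto simp: adm_def)
  show ?thesis
  proof (rule cauchy_bound[where r="\<lambda>n. K * \<beta> / (- a) * h (- real n) powr (- a)"])
    fix n m :: nat assume "n \<le> m"
    have "norm (U 0 (Ip u1 (- real n) - Ip u2 (- real n)) - U 0 (Ip u1 (- real m) - Ip u2 (- real m)))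
      \<le> K * \<beta> / (- a) * h 0 powr a * (h (- real n) powr (- a) - h (- real m) powr (- a))"
      by (rule P_est[OF D_deriv(1)[OF c] \<beta>(2)]) (use \<open>n \<le> m\<close> \<beta> in auto)
    also have "\<dots> \<le> K * \<beta> / (- a) * h (- real n) powr (- a)"
    proof -
      have C: "K * \<beta> / (- a) \<ge> 0" using a_neg K_pos \<beta> by (intro divide_nonneg_pos) auto
      have "K * \<beta> / (- a) * (h (- real n) powr (- a) - h (- real m) powr (- a)) \<le> K * \<beta> / (- a) * h (- real n) powr (- a)"
        by (rule mult_left_mono[OF _ C]) simp
      then show ?thesis by (simp add: gr_0[OF gr(1)])
    qed
    finally show "norm ((Ip u1 (- real m) - Ip u2 (- real m)) - (Ip u1 (- real n) - Ip u2 (- real n))) \<le> K * \<beta> / (- a) * h (- real n) powr (- a)"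
      by (simp add: U0 norm_minus_commute)
  next
    show "(\<lambda>n. K * \<beta> / (- a) * h (- real n) powr (- a)) \<longlonglongrightarrow> 0"
      using tendsto_mult_left[OF hn_lim, of "K * \<beta> / (- a)"] by simp
  qed
qed

lemma convQ_diff:
  assumes "adm u1" "adm u2"
  shows "convergent (\<lambda>n. Iq u1 (real n) - Iq u2 (real n))"
proof -
  obtain \<beta> where \<beta>: "\<beta> \<ge> 0" "\<And>\<sigma>. norm (u1 \<sigma> - u2 \<sigma>) \<le> \<beta> * m \<sigma>" using adm_diff_bound[OF assms] by blast
  have c: "continuous_on UNIV u1" "continuous_on UNIV u2" using assms by (auto simp: adm_def)
  show ?thesis
  proof (rule cauchy_bound[where r="\<lambda>n. K * \<beta> / b * k (real n) powr (- b)"])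
    fix n m :: nat assume "n \<le> m"
    have "norm (U 0 (Iq u1 (real m) - Iq u2 (real m)) - U 0 (Iq u1 (real n) - Iq u2 (real n)))
      \<le> K * \<beta> / b * k 0 powr b * (k (real n) powr (- b) - k (real m) powr (- b))"
      by (rule Q_est[OF D_deriv(2)[OF c] \<beta>(2)]) (use \<open>n \<le> m\<close> \<beta> in auto)
    also have "\<dots> \<le> K * \<beta> / b * k (real n) powr (- b)"
    proof -
      have C: "K * \<beta> / b \<ge> 0" using b_pos K_pos \<beta> by (intro divide_nonneg_pos) auto
      have "K * \<beta> / b * (k (real n) powr (- b) - k (real m) powr (- b)) \<le> K * \<beta> / b * k (real n) powr (- b)"
        by (rule mult_left_mono[OF _ C]) simp
      then show ?thesis by (simp add: gr_0[OF gr(2)])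
    qed
    finally show "norm ((Iq u1 (real m) - Iq u2 (real m)) - (Iq u1 (real n) - Iq u2 (real n))) \<le> K * \<beta> / b * k (real n) powr (- b)"
      by (simp add: U0)
  next
    show "(\<lambda>n. K * \<beta> / b * k (real n) powr (- b)) \<longlonglongrightarrow> 0"
      using tendsto_mult_left[OF kn_lim, of "K * \<beta> / b"] by simp
  qed
qed

lemma Ip_zero: "Ip (\<lambda>_. 0) c = 0" and Iq_zero: "Iq (\<lambda>_. 0) c = 0"
  by (simp_all add: Ip_def Iq_def prim_def)

lemma convP: "adm u \<Longrightarrow> convergent (\<lambda>n. Ip u (- real n))"
  using convP_diff[OF _ adm_zero, of u] by (simp add: Ip_zero)
lemma convQ: "adm u \<Longrightarrow> convergent (\<lambda>n. Iq u (real n))"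
  using convQ_diff[OF _ adm_zero, of u] by (simp add: Iq_zero)

lemma limP_diff: "adm u1 \<Longrightarrow> adm u2 \<Longrightarrow> (\<lambda>n. Ip u1 (- real n) - Ip u2 (- real n)) \<longlonglongrightarrow> limP u1 - limP u2"
  unfolding limP_def by (intro tendsto_diff convP[unfolded convergent_LIMSEQ_iff])
lemma limQ_diff: "adm u1 \<Longrightarrow> adm u2 \<Longrightarrow> (\<lambda>n. Iq u1 (real n) - Iq u2 (real n)) \<longlonglongrightarrow> limQ u1 - limQ u2"
  unfolding limQ_def by (intro tendsto_diff convQ[unfolded convergent_LIMSEQ_iff])

lemma GP_deriv:
  assumes "adm u"
  shows "(GP u has_vector_derivative A \<tau> (GP u \<tau>) + U \<tau> (P0 (V \<tau> (u \<tau>)))) (at \<tau>)"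
proof -
  have c: "continuous_on UNIV u" using assms by (simp add: adm_def)
  have "((\<lambda>\<tau>. U \<tau> (Ip u \<tau> - limP u)) has_vector_derivative U \<tau> (P0 (V \<tau> (u \<tau>))) + (A \<tau> o\<^sub>L U \<tau>) (Ip u \<tau> - limP u)) (at \<tau>)"
    using bounded_bilinear.has_vector_derivative[OF bounded_bilinear_blinfun_apply U_props(2)
        has_vector_derivative_diff[OF Ip_deriv[OF c] has_vector_derivative_const]] by simp
  then show ?thesis unfolding GP_def by (simp add: add.commute)
qed

lemma GQ_deriv:
  assumes "adm u"
  shows "(GQ u has_vector_derivative A \<tau> (GQ u \<tau>) - U \<tau> ((id_blinfun - P0) (V \<tau> (u \<tau>)))) (at \<tau>)"
proof -
  have c: "continuous_on UNIV u" using assms by (simp add: adm_def)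
  have "((\<lambda>\<tau>. U \<tau> (limQ u - Iq u \<tau>)) has_vector_derivative U \<tau> (0 - (id_blinfun - P0) (V \<tau> (u \<tau>))) + (A \<tau> o\<^sub>L U \<tau>) (limQ u - Iq u \<tau>)) (at \<tau>)"
    using bounded_bilinear.has_vector_derivative[OF bounded_bilinear_blinfun_apply U_props(2)
        has_vector_derivative_diff[OF has_vector_derivative_const Iq_deriv[OF c]]] by simp
  then show ?thesis unfolding GQ_def by (simp add: blinfun.bilinear_simps algebra_simps)
qed

lemma Gr_deriv:
  assumes "adm u"
  shows "(Gr u has_vector_derivative A \<tau> (Gr u \<tau>) + u \<tau>) (at \<tau>)"
proof -
  have "(Gr u has_vector_derivative (A \<tau> (GP u \<tau>) + U \<tau> (P0 (V \<tau> (u \<tau>)))) - (A \<tau> (GQ u \<tau>) - U \<tau> ((id_blinfun - P0) (V \<tau> (u \<tau>))))) (at \<tau>)"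
    unfolding Gr_def[abs_def] by (intro has_vector_derivative_diff GP_deriv GQ_deriv assms)
  moreover have "(A \<tau> (GP u \<tau>) + U \<tau> (P0 (V \<tau> (u \<tau>)))) - (A \<tau> (GQ u \<tau>) - U \<tau> ((id_blinfun - P0) (V \<tau> (u \<tau>))))
      = A \<tau> (Gr u \<tau>) + U \<tau> (V \<tau> (u \<tau>))"
    by (simp add: Gr_def blinfun.bilinear_simps)
  moreover have "U \<tau> (V \<tau> (u \<tau>)) = u \<tau>" using UV[of \<tau>] by (metis blinfun_apply_blinfun_compose blinfun_apply_id_blinfun)
  ultimately show ?thesis by simp
qed

lemma Gr_cont: "adm u \<Longrightarrow> continuous_on S (Gr u)"
  using Gr_deriv by (intro continuous_at_imp_continuous_on ballI has_vector_derivative_continuous) auto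

end



context thm10 begin

lemma GP_diff_gen:
  assumes ad: "adm u1" "adm u2"
    and b1: "\<And>\<sigma>. norm (u1 \<sigma> - u2 \<sigma>) \<le> \<beta>1 * m \<sigma>"
    and b2: "\<And>\<sigma>. c1 \<le> \<sigma> \<Longrightarrow> \<sigma> \<le> \<tau> \<Longrightarrow> norm (u1 \<sigma> - u2 \<sigma>) \<le> \<beta>2 * m \<sigma>"
    and "c1 \<le> \<tau>" "\<beta>1 \<ge> 0" "\<beta>2 \<ge> 0"
  shows "norm (GP u1 \<tau> - GP u2 \<tau>) \<le> K * \<beta>2 / (- a) * (1 - h \<tau> powr a * h c1 powr (- a))
      + K * \<beta>1 / (- a) * (h \<tau> powr a * h c1 powr (- a))"
proof -
  have c: "continuous_on UNIV u1" "continuous_on UNIV u2" using ad by (auto simp: adm_def)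
  define D where "D c = Ip u1 c - Ip u2 c" for c
  define LP where "LP = limP u1 - limP u2"
  have DL: "(\<lambda>n. D (- real n)) \<longlonglongrightarrow> LP" unfolding D_def LP_def by (rule limP_diff[OF ad])
  have eq: "GP u1 \<tau> - GP u2 \<tau> = U \<tau> (D \<tau> - LP)"
    by (simp add: GP_def D_def LP_def blinfun.bilinear_simps)
  have Dd: "(D has_vector_derivative P0 (V \<sigma> (u1 \<sigma> - u2 \<sigma>))) (at \<sigma>)" for \<sigma>
    unfolding D_def[abs_def] by (rule D_deriv(1)[OF c])
  have hta: "h \<tau> powr a * h \<tau> powr (- a) = 1" using hpos[of \<tau>] by (simp add: powr_minus)
  have lim: "(\<lambda>n. U \<tau> (D \<tau> - D (- real n))) \<longlonglongrightarrow> U \<tau> (D \<tau> - LP)"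
    by (intro tendsto_intros DL)
  have ev: "\<forall>\<^sub>F n in sequentially. norm (U \<tau> (D \<tau> - D (- real n))) \<le>
      K * \<beta>2 / (- a) * (1 - h \<tau> powr a * h c1 powr (- a)) + K * \<beta>1 / (- a) * (h \<tau> powr a * h c1 powr (- a))"
  proof -
    have "\<forall>\<^sub>F n in sequentially. real n \<ge> - c1"
      using filterlim_real_sequentially unfolding filterlim_at_top by blast
    then show ?thesis
    proof eventually_elim
      case (elim n)
      have m1: "norm (U \<tau> (D \<tau>) - U \<tau> (D c1)) \<le> K * \<beta>2 / (- a) * h \<tau> powr a * (h \<tau> powr (- a) - h c1 powr (- a))"
        by (rule P_est[OF Dd b2]) (use assms in auto)
      have m2: "norm (U \<tau> (D c1) - U \<tau> (D (- real n))) \<le> K * \<beta>1 / (- a) * h \<tau> powr a * (h c1 powr (- a) - h (- real n) powr (- a))"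
        by (rule P_est[OF Dd b1]) (use assms elim in auto)
      have "U \<tau> (D \<tau> - D (- real n)) = (U \<tau> (D \<tau>) - U \<tau> (D c1)) + (U \<tau> (D c1) - U \<tau> (D (- real n)))"
        by (simp add: blinfun.bilinear_simps)
      then have "norm (U \<tau> (D \<tau> - D (- real n))) \<le> norm (U \<tau> (D \<tau>) - U \<tau> (D c1)) + norm (U \<tau> (D c1) - U \<tau> (D (- real n)))"
        by (metis norm_triangle_ineq)
      also have "\<dots> \<le> K * \<beta>2 / (- a) * h \<tau> powr a * (h \<tau> powr (- a) - h c1 powr (- a)) +
          K * \<beta>1 / (- a) * h \<tau> powr a * (h c1 powr (- a) - h (- real n) powr (- a))"
        using m1 m2 by simp
      also have "K * \<beta>1 / (- a) * h \<tau> powr a * (h c1 powr (- a) - h (- real n) powr (- a)) \<le>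
          K * \<beta>1 / (- a) * h \<tau> powr a * h c1 powr (- a)"
      proof -
        have C0: "K * \<beta>1 / (- a) \<ge> 0" using a_neg K_pos assms by (intro divide_nonneg_pos) auto
        have C: "K * \<beta>1 / (- a) * h \<tau> powr a \<ge> 0" using C0 by (intro mult_nonneg_nonneg) simp_all
        have "h c1 powr (- a) - h (- real n) powr (- a) \<le> h c1 powr (- a)" by simp
        from mult_left_mono[OF this C] show ?thesis by simp
      qed
      also have "K * \<beta>2 / (- a) * h \<tau> powr a * (h \<tau> powr (- a) - h c1 powr (- a)) =
          K * \<beta>2 / (- a) * (1 - h \<tau> powr a * h c1 powr (- a))"
        using hta by (simp add: algebra_simps)
      finally show ?case by (simp add: mult_ac)
    qed
  qed
  show ?thesis unfolding eq by (rule lim_norm_bound[OF lim ev])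
qed

lemma GQ_diff_gen:
  assumes ad: "adm u1" "adm u2"
    and b1: "\<And>\<sigma>. norm (u1 \<sigma> - u2 \<sigma>) \<le> \<beta>1 * m \<sigma>"
    and b2: "\<And>\<sigma>. \<tau> \<le> \<sigma> \<Longrightarrow> \<sigma> \<le> c2 \<Longrightarrow> norm (u1 \<sigma> - u2 \<sigma>) \<le> \<beta>2 * m \<sigma>"
    and "\<tau> \<le> c2" "\<beta>1 \<ge> 0" "\<beta>2 \<ge> 0"
  shows "norm (GQ u1 \<tau> - GQ u2 \<tau>) \<le> K * \<beta>2 / b * (1 - k \<tau> powr b * k c2 powr (- b))
      + K * \<beta>1 / b * (k \<tau> powr b * k c2 powr (- b))"
proof -
  have c: "continuous_on UNIV u1" "continuous_on UNIV u2" using ad by (auto simp: adm_def)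
  define D where "D c = Iq u1 c - Iq u2 c" for c
  define LQ where "LQ = limQ u1 - limQ u2"
  have DL: "(\<lambda>n. D (real n)) \<longlonglongrightarrow> LQ" unfolding D_def LQ_def by (rule limQ_diff[OF ad])
  have eq: "GQ u1 \<tau> - GQ u2 \<tau> = U \<tau> (LQ - D \<tau>)"
    by (simp add: GQ_def D_def LQ_def blinfun.bilinear_simps algebra_simps)
  have Dd: "(D has_vector_derivative (id_blinfun - P0) (V \<sigma> (u1 \<sigma> - u2 \<sigma>))) (at \<sigma>)" for \<sigma>
    unfolding D_def[abs_def] by (rule D_deriv(2)[OF c])
  have kta: "k \<tau> powr b * k \<tau> powr (- b) = 1" using kpos[of \<tau>] by (simp add: powr_minus)
  have lim: "(\<lambda>n. U \<tau> (D (real n) - D \<tau>)) \<longlonglongrightarrow> U \<tau> (LQ - D \<tau>)"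
    by (intro tendsto_intros DL)
  have ev: "\<forall>\<^sub>F n in sequentially. norm (U \<tau> (D (real n) - D \<tau>)) \<le>
      K * \<beta>2 / b * (1 - k \<tau> powr b * k c2 powr (- b)) + K * \<beta>1 / b * (k \<tau> powr b * k c2 powr (- b))"
  proof -
    have "\<forall>\<^sub>F n in sequentially. real n \<ge> c2"
      using filterlim_real_sequentially unfolding filterlim_at_top by blast
    then show ?thesis
    proof eventually_elim
      case (elim n)
      have m1: "norm (U \<tau> (D c2) - U \<tau> (D \<tau>)) \<le> K * \<beta>2 / b * k \<tau> powr b * (k \<tau> powr (- b) - k c2 powr (- b))"
        by (rule Q_est[OF Dd b2]) (use assms in auto)
      have m2: "norm (U \<tau> (D (real n)) - U \<tau> (D c2)) \<le> K * \<beta>1 / b * k \<tau> powr b * (k c2 powr (- b) - k (real n) powr (- b))"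
        by (rule Q_est[OF Dd b1]) (use assms elim in auto)
      have "U \<tau> (D (real n) - D \<tau>) = (U \<tau> (D (real n)) - U \<tau> (D c2)) + (U \<tau> (D c2) - U \<tau> (D \<tau>))"
        by (simp add: blinfun.bilinear_simps)
      then have "norm (U \<tau> (D (real n) - D \<tau>)) \<le> norm (U \<tau> (D (real n)) - U \<tau> (D c2)) + norm (U \<tau> (D c2) - U \<tau> (D \<tau>))"
        by (metis norm_triangle_ineq)
      also have "\<dots> \<le> K * \<beta>1 / b * k \<tau> powr b * (k c2 powr (- b) - k (real n) powr (- b)) +
          K * \<beta>2 / b * k \<tau> powr b * (k \<tau> powr (- b) - k c2 powr (- b))"
        using m1 m2 by simp
      also have "K * \<beta>1 / b * k \<tau> powr b * (k c2 powr (- b) - k (real n) powr (- b)) \<le>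
          K * \<beta>1 / b * k \<tau> powr b * k c2 powr (- b)"
      proof -
        have C0: "K * \<beta>1 / b \<ge> 0" using b_pos K_pos assms by (intro divide_nonneg_pos) auto
        have C: "K * \<beta>1 / b * k \<tau> powr b \<ge> 0" using C0 by (intro mult_nonneg_nonneg) simp_all
        have "k c2 powr (- b) - k (real n) powr (- b) \<le> k c2 powr (- b)" by simp
        from mult_left_mono[OF this C] show ?thesis by simp
      qed
      also have "K * \<beta>2 / b * k \<tau> powr b * (k \<tau> powr (- b) - k c2 powr (- b)) =
          K * \<beta>2 / b * (1 - k \<tau> powr b * k c2 powr (- b))"
        using kta by (simp add: algebra_simps)
      finally show ?case by (simp add: mult_ac)
    qed
  qed
  show ?thesis unfolding eq by (rule lim_norm_bound[OF lim ev])
qed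

lemma Gr_diff_gen:
  assumes ad: "adm u1" "adm u2"
    and b1: "\<And>\<sigma>. norm (u1 \<sigma> - u2 \<sigma>) \<le> \<beta>1 * m \<sigma>"
    and b2: "\<And>\<sigma>. c1 \<le> \<sigma> \<Longrightarrow> \<sigma> \<le> c2 \<Longrightarrow> norm (u1 \<sigma> - u2 \<sigma>) \<le> \<beta>2 * m \<sigma>"
    and "c1 \<le> \<tau>" "\<tau> \<le> c2" "\<beta>1 \<ge> 0" "\<beta>2 \<ge> 0"
  shows "norm (Gr u1 \<tau> - Gr u2 \<tau>) \<le> K * \<beta>2 / (- a) * (1 - h \<tau> powr a * h c1 powr (- a))
      + K * \<beta>1 / (- a) * (h \<tau> powr a * h c1 powr (- a))
      + (K * \<beta>2 / b * (1 - k \<tau> powr b * k c2 powr (- b))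
      + K * \<beta>1 / b * (k \<tau> powr b * k c2 powr (- b)))"
proof -
  have p: "norm (GP u1 \<tau> - GP u2 \<tau>) \<le> K * \<beta>2 / (- a) * (1 - h \<tau> powr a * h c1 powr (- a))
      + K * \<beta>1 / (- a) * (h \<tau> powr a * h c1 powr (- a))"
    by (rule GP_diff_gen[OF ad b1]) (use b2 assms in auto)
  have q: "norm (GQ u1 \<tau> - GQ u2 \<tau>) \<le> K * \<beta>2 / b * (1 - k \<tau> powr b * k c2 powr (- b))
      + K * \<beta>1 / b * (k \<tau> powr b * k c2 powr (- b))"
    by (rule GQ_diff_gen[OF ad b1]) (use b2 assms in auto)
  have "Gr u1 \<tau> - Gr u2 \<tau> = (GP u1 \<tau> - GP u2 \<tau>) - (GQ u1 \<tau> - GQ u2 \<tau>)" by (simp add: Gr_def)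
  then have "norm (Gr u1 \<tau> - Gr u2 \<tau>) \<le> norm (GP u1 \<tau> - GP u2 \<tau>) + norm (GQ u1 \<tau> - GQ u2 \<tau>)"
    by (metis norm_triangle_ineq4)
  then show ?thesis using p q by linarith
qed

definition \<theta> where "\<theta> = K * (1 / \<bar>a\<bar> + 1 / b)"

lemma Gr_diff:
  assumes ad: "adm u1" "adm u2"
    and b1: "\<And>\<sigma>. norm (u1 \<sigma> - u2 \<sigma>) \<le> \<beta> * m \<sigma>" and "\<beta> \<ge> 0"
  shows "norm (Gr u1 \<tau> - Gr u2 \<tau>) \<le> \<beta> * \<theta>"
proof -
  have "norm (Gr u1 \<tau> - Gr u2 \<tau>) \<le> K * \<beta> / (- a) * (1 - h \<tau> powr a * h \<tau> powr (- a))
      + K * \<beta> / (- a) * (h \<tau> powr a * h \<tau> powr (- a))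
      + (K * \<beta> / b * (1 - k \<tau> powr b * k \<tau> powr (- b))
      + K * \<beta> / b * (k \<tau> powr b * k \<tau> powr (- b)))"
    by (rule Gr_diff_gen[OF ad b1 b1]) (use assms in auto)
  also have "\<dots> = \<beta> * \<theta>" using a_neg b_pos by (simp add: \<theta>_def field_simps)
  finally show ?thesis .
qed

lemma Gr_zero: "Gr (\<lambda>_. 0) \<tau> = 0"
  by (simp add: Gr_def GP_def GQ_def limP_def limQ_def Ip_zero Iq_zero)

lemma Gr_bound:
  assumes "adm u" "\<And>\<sigma>. norm (u \<sigma>) \<le> \<beta> * m \<sigma>" "\<beta> \<ge> 0"
  shows "norm (Gr u \<tau>) \<le> \<beta> * \<theta>"
  using Gr_diff[OF assms(1) adm_zero, of \<beta> \<tau>] assms by (simp add: Gr_zero)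

end



context thm10 begin

definition Fp where "Fp t x = A t x + f t x"

lemma mu_pow_le1: "\<mu> \<bar>t\<bar> powr (- \<epsilon>) \<le> 1"
  using powr_mono[of "- \<epsilon>" 0 "\<mu> \<bar>t\<bar>"] eps_nn gr_ge1[OF gr(3), of t] by simp

lemma m_le_h': "m t \<le> h' t / h t"
proof -
  have "h' t / h t * \<mu> \<bar>t\<bar> powr (- \<epsilon>) \<le> h' t / h t * 1"
    using h'_nn[of t] hpos[of t] mu_pow_le1[of t] by (intro mult_left_mono) auto
  then show ?thesis using m_le_h[of t] by simp
qed

lemma lode_P: "lode Fp (\<lambda>t. LA t + \<gamma> * ln (h t)) (\<lambda>t. norm (A t) + \<gamma> * (h' t / h t))"
proof
  show "continuous_on UNIV (\<lambda>(t, x). Fp t x)"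
  proof -
    have "continuous_on UNIV (\<lambda>p::real \<times> 'a. A (fst p))"
      by (rule continuous_on_compose2[OF A_cont]) (auto intro: continuous_intros)
    then have c1: "continuous_on UNIV (\<lambda>p::real \<times> 'a. A (fst p) (snd p))"
      by (auto intro!: continuous_intros)
    show ?thesis unfolding Fp_def case_prod_unfold
      using continuous_on_add[OF c1 f_cont[unfolded case_prod_unfold]] by simp
  qed
  show "((\<lambda>t. LA t + \<gamma> * ln (h t)) has_real_derivative norm (A t) + \<gamma> * (h' t / h t)) (at t)" for t
  proof -
    have "((\<lambda>t. LA t + \<gamma> * ln (h t)) has_real_derivative norm (A t) + \<gamma> * (inverse (h t) * h' t)) (at t)"
      by (intro DERIV_add DERIV_cmult LA_deriv DERIV_ln[THEN DERIV_chain2] h_deriv hpos)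
    then show ?thesis by (simp add: divide_inverse mult_ac)
  qed
  show "0 \<le> norm (A t) + \<gamma> * (h' t / h t)" for t
    using h'_nn[of t] hpos[of t] \<gamma>_pos by simp
  show "norm (Fp t x - Fp t y) \<le> (norm (A t) + \<gamma> * (h' t / h t)) * norm (x - y)" for t x y
  proof -
    have "Fp t x - Fp t y = A t (x - y) + (f t x - f t y)"
      by (simp add: Fp_def blinfun.bilinear_simps)
    then have "norm (Fp t x - Fp t y) \<le> norm (A t (x - y)) + norm (f t x - f t y)"
      by (metis norm_triangle_ineq)
    also have "\<dots> \<le> norm (A t) * norm (x - y) + \<gamma> * (h' t / h t) * norm (x - y)"
    proof (rule add_mono)
      show "norm (A t (x - y)) \<le> norm (A t) * norm (x - y)" by (rule norm_blinfun)
      have "norm (f t x - f t y) \<le> \<gamma> * m t * norm (x - y)" using f_lip by (simp add: m_def)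
      also have "\<dots> \<le> \<gamma> * (h' t / h t) * norm (x - y)"
        using m_le_h' \<gamma>_pos by (intro mult_right_mono mult_left_mono) auto
      finally show "norm (f t x - f t y) \<le> \<gamma> * (h' t / h t) * norm (x - y)" .
    qed
    finally show ?thesis by (simp add: algebra_simps)
  qed
qed

abbreviation "psol y \<equiv> (\<forall>\<tau>. (y has_vector_derivative Fp \<tau> (y \<tau>)) (at \<tau>))"

definition ysP where "ysP t v = (SOME y. y t = v \<and> psol y)"

lemma ysP: "ysP t v t = v" "psol (ysP t v)"
  using someI_ex[OF lode.exists_sol[OF lode_P, of t v], folded ysP_def] by auto

lemma psol_unique: assumes "psol y" shows "ysP \<tau> (y \<tau>) = y"
  using lode.unique[OF lode_P, of "ysP \<tau> (y \<tau>)" y \<tau>] ysP[of \<tau> "y \<tau>"] assms by auto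

lemma psol_cont: "psol y \<Longrightarrow> continuous_on S y"
  by (intro continuous_at_imp_continuous_on ballI has_vector_derivative_continuous) auto

lemma adm_f: "continuous_on UNIV y \<Longrightarrow> adm (\<lambda>\<sigma>. f \<sigma> (y \<sigma>))"
proof -
  assume c: "continuous_on UNIV y"
  have "continuous_on UNIV (\<lambda>t. (t, y t))" by (intro continuous_on_Pair continuous_on_id c)
  then have "continuous_on UNIV (\<lambda>\<sigma>. f \<sigma> (y \<sigma>))"
    using continuous_on_compose2[OF f_cont, of UNIV "\<lambda>t. (t, y t)"] by auto
  moreover have "norm (f \<sigma> (y \<sigma>)) \<le> \<alpha> * m \<sigma>" for \<sigma> using f_bound by (simp add: m_def)
  ultimately show ?thesis unfolding adm_def using \<alpha>_pos by (auto intro!: exI[of _ \<alpha>])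
qed

definition H where "H t v = v - Gr (\<lambda>\<sigma>. f \<sigma> (ysP t v \<sigma>)) t"

lemma theta_alpha: "\<alpha> * \<theta> = K * \<alpha> * (1 / \<bar>a\<bar> + 1 / b)" by (simp add: \<theta>_def)

lemma H_bound: "norm (H t v - v) \<le> K * \<alpha> * (1 / \<bar>a\<bar> + 1 / b)"
proof -
  have "norm (Gr (\<lambda>\<sigma>. f \<sigma> (ysP t v \<sigma>)) t) \<le> \<alpha> * \<theta>"
    by (rule Gr_bound[OF adm_f[OF psol_cont[OF ysP(2)]]]) (use f_bound \<alpha>_pos in \<open>auto simp: m_def\<close>)
  then show ?thesis by (simp add: H_def theta_alpha)
qed

lemma H_psol: "psol y \<Longrightarrow> H \<tau> (y \<tau>) = y \<tau> - Gr (\<lambda>\<sigma>. f \<sigma> (y \<sigma>)) \<tau>"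
  by (simp add: H_def psol_unique)

lemma H_lin:
  assumes y: "psol y"
  shows "((\<lambda>\<tau>. H \<tau> (y \<tau>)) has_vector_derivative A \<tau> (H \<tau> (y \<tau>))) (at \<tau>)"
proof -
  have ad: "adm (\<lambda>\<sigma>. f \<sigma> (y \<sigma>))" by (rule adm_f[OF psol_cont[OF y]])
  have "((\<lambda>\<tau>. y \<tau> - Gr (\<lambda>\<sigma>. f \<sigma> (y \<sigma>)) \<tau>) has_vector_derivative
      Fp \<tau> (y \<tau>) - (A \<tau> (Gr (\<lambda>\<sigma>. f \<sigma> (y \<sigma>)) \<tau>) + f \<tau> (y \<tau>))) (at \<tau>)"
    by (intro has_vector_derivative_diff y[rule_format] Gr_deriv ad)
  moreover have "Fp \<tau> (y \<tau>) - (A \<tau> (Gr (\<lambda>\<sigma>. f \<sigma> (y \<sigma>)) \<tau>) + f \<tau> (y \<tau>)) = A \<tau> (H \<tau> (y \<tau>))"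
    by (simp add: Fp_def H_psol[OF y] blinfun.bilinear_simps)
  ultimately show ?thesis by (simp add: H_psol[OF y])
qed

definition xw where "xw t w \<tau> = U \<tau> (V t w)"

lemma xw_cont: "continuous_on S (xw t w)"
  unfolding xw_def by (intro continuous_intros U_cont)

lemma xw_deriv: "(xw t w has_vector_derivative A \<tau> (xw t w \<tau>)) (at \<tau>)"
  unfolding xw_def[abs_def] by (rule lin_sol)

lemma xw_t: "xw t w t = w"
  using UV[of t] unfolding xw_def by (metis blinfun_apply_blinfun_compose blinfun_apply_id_blinfun)

lemma adm_xz: "adm (\<lambda>\<sigma>. f \<sigma> (xw t w \<sigma> + apply_bcontfun z \<sigma>))"
  by (rule adm_f) (intro continuous_intros xw_cont continuous_on_apply_bcontfun)

lemma Gr_bcontfun: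
  assumes "adm u" "\<And>\<sigma>. norm (u \<sigma>) \<le> \<beta> * m \<sigma>" "\<beta> \<ge> 0"
  shows "Gr u \<in> bcontfun"
  by (rule bcontfun_normI[OF Gr_cont[OF assms(1)] Gr_bound[OF assms]])

definition Psi where "Psi t w z = Bcontfun (Gr (\<lambda>\<sigma>. f \<sigma> (xw t w \<sigma> + apply_bcontfun z \<sigma>)))"

lemma Psi_apply: "apply_bcontfun (Psi t w z) \<tau> = Gr (\<lambda>\<sigma>. f \<sigma> (xw t w \<sigma> + apply_bcontfun z \<sigma>)) \<tau>"
proof -
  have "Gr (\<lambda>\<sigma>. f \<sigma> (xw t w \<sigma> + apply_bcontfun z \<sigma>)) \<in> bcontfun"
    by (rule Gr_bcontfun[OF adm_xz, where \<beta>=\<alpha>]) (use f_bound \<alpha>_pos in \<open>auto simp: m_def\<close>)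
  then show ?thesis by (simp add: Psi_def Bcontfun_inverse)
qed

lemma gt_lt1: "\<gamma> * \<theta> < 1" and gt_nn: "\<gamma> * \<theta> \<ge> 0"
  using small K_pos \<gamma>_pos b_pos by (auto simp: \<theta>_def mult_ac)

lemma Psi_contr: "dist (Psi t w z1) (Psi t w z2) \<le> \<gamma> * \<theta> * dist z1 z2"
proof (rule dist_bound)
  fix \<tau>
  have "norm (Gr (\<lambda>\<sigma>. f \<sigma> (xw t w \<sigma> + apply_bcontfun z1 \<sigma>)) \<tau> - Gr (\<lambda>\<sigma>. f \<sigma> (xw t w \<sigma> + apply_bcontfun z2 \<sigma>)) \<tau>)
      \<le> (\<gamma> * dist z1 z2) * \<theta>"
  proof (rule Gr_diff[OF adm_xz adm_xz])
    show "norm (f \<sigma> (xw t w \<sigma> + apply_bcontfun z1 \<sigma>) - f \<sigma> (xw t w \<sigma> + apply_bcontfun z2 \<sigma>)) \<le> \<gamma> * dist z1 z2 * m \<sigma>" for \<sigma>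
    proof -
      have "norm (f \<sigma> (xw t w \<sigma> + apply_bcontfun z1 \<sigma>) - f \<sigma> (xw t w \<sigma> + apply_bcontfun z2 \<sigma>))
          \<le> \<gamma> * m \<sigma> * norm (apply_bcontfun z1 \<sigma> - apply_bcontfun z2 \<sigma>)"
        using f_lip[of \<sigma> "xw t w \<sigma> + apply_bcontfun z1 \<sigma>" "xw t w \<sigma> + apply_bcontfun z2 \<sigma>"] by (simp add: m_def)
      also have "\<dots> \<le> \<gamma> * m \<sigma> * dist z1 z2"
        using dist_bounded[of z1 \<sigma> z2] \<gamma>_pos m_nn by (intro mult_left_mono) (auto simp: dist_norm)
      finally show ?thesis by (simp add: mult_ac)
    qed
    show "0 \<le> \<gamma> * dist z1 z2" using \<gamma>_pos by simp
  qed
  then show "dist (apply_bcontfun (Psi t w z1) \<tau>) (apply_bcontfun (Psi t w z2) \<tau>) \<le> \<gamma> * \<theta> * dist z1 z2"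
    by (simp add: Psi_apply dist_norm mult_ac)
qed

lemma Psi_fix_ex1: "\<exists>!z. Psi t w z = z"
  by (rule banach_fix_type[OF gt_nn gt_lt1]) (use Psi_contr in blast)

definition zf where "zf t w = (THE z. Psi t w z = z)"

lemma zf_fix: "Psi t w (zf t w) = zf t w"
  unfolding zf_def by (rule theI') (rule Psi_fix_ex1)

lemma zf_unique: "Psi t w z = z \<Longrightarrow> z = zf t w"
  using Psi_fix_ex1[of t w] zf_fix[of t w] by blast

lemma zf_eq: "apply_bcontfun (zf t w) \<tau> = Gr (\<lambda>\<sigma>. f \<sigma> (xw t w \<sigma> + apply_bcontfun (zf t w) \<sigma>)) \<tau>"
  by (metis Psi_apply zf_fix)

definition L where "L t w = w + apply_bcontfun (zf t w) t"

lemma psol_from_fix: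
  assumes zc: "continuous_on UNIV z" and z: "\<And>\<tau>. z \<tau> = Gr (\<lambda>\<sigma>. f \<sigma> (xw t w \<sigma> + z \<sigma>)) \<tau>"
  shows "psol (\<lambda>\<tau>. xw t w \<tau> + z \<tau>)"
proof
  fix \<tau>
  let ?u = "\<lambda>\<sigma>. f \<sigma> (xw t w \<sigma> + z \<sigma>)"
  have ad: "adm ?u" by (rule adm_f) (intro continuous_intros xw_cont zc)
  have D: "((\<lambda>\<tau>. xw t w \<tau> + Gr ?u \<tau>) has_vector_derivative A \<tau> (xw t w \<tau>) + (A \<tau> (Gr ?u \<tau>) + ?u \<tau>)) (at \<tau>)"
    by (intro has_vector_derivative_add xw_deriv Gr_deriv ad)
  have e1: "(\<lambda>\<tau>. xw t w \<tau> + Gr ?u \<tau>) = (\<lambda>\<tau>. xw t w \<tau> + z \<tau>)"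
    by (rule ext) (simp only: z[symmetric])
  have e2: "A \<tau> (xw t w \<tau>) + (A \<tau> (Gr ?u \<tau>) + ?u \<tau>) = Fp \<tau> (xw t w \<tau> + z \<tau>)"
    by (simp only: z[symmetric]) (simp add: Fp_def blinfun.bilinear_simps algebra_simps)
  show "((\<lambda>\<tau>. xw t w \<tau> + z \<tau>) has_vector_derivative Fp \<tau> (xw t w \<tau> + z \<tau>)) (at \<tau>)"
    using D unfolding e1 e2 .
qed

lemma yL_psol: "psol (\<lambda>\<tau>. xw t w \<tau> + apply_bcontfun (zf t w) \<tau>)"
  by (rule psol_from_fix[OF continuous_on_apply_bcontfun]) (rule zf_eq)

lemma H_L: "H t (L t w) = w"
proof -
  let ?y = "\<lambda>\<tau>. xw t w \<tau> + apply_bcontfun (zf t w) \<tau>"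
  have "L t w = ?y t" by (simp add: L_def xw_t)
  then have "H t (L t w) = ?y t - Gr (\<lambda>\<sigma>. f \<sigma> (?y \<sigma>)) t"
    using H_psol[OF yL_psol[where t=t and w=w], where \<tau>=t] by simp
  also have "\<dots> = w" by (simp only: zf_eq[where t=t and w=w and \<tau>=t, symmetric]) (simp add: xw_t)
  finally show ?thesis .
qed

lemma L_H: "L t (H t v) = v"
proof -
  define y where "y = ysP t v"
  have y: "psol y" unfolding y_def by (rule ysP(2))
  define x where "x \<tau> = H \<tau> (y \<tau>)" for \<tau>
  have "solves (\<lambda>t y. A t y) x" unfolding solves_def x_def using H_lin[OF y] by simp
  then have xT: "T \<tau> t (x t) = x \<tau>" for \<tau> using T_evol by (auto simp: evolution_op_def)
  have xx: "x \<tau> = xw t (H t v) \<tau>" for \<tau>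
    using xT[of \<tau>] by (simp add: xw_def T_eq x_def y_def ysP(1))
  define zg where "zg = Gr (\<lambda>\<sigma>. f \<sigma> (y \<sigma>))"
  have zgb: "zg \<in> bcontfun" unfolding zg_def
    by (rule Gr_bcontfun[OF adm_f[OF psol_cont[OF y]], where \<beta>=\<alpha>]) (use f_bound \<alpha>_pos in \<open>auto simp: m_def\<close>)
  have yxz: "y \<sigma> = xw t (H t v) \<sigma> + zg \<sigma>" for \<sigma>
    using H_psol[OF y, of \<sigma>] xx[of \<sigma>] by (simp add: x_def zg_def diff_eq_eq)
  have "Psi t (H t v) (Bcontfun zg) = Bcontfun zg"
  proof (rule bcontfun_eqI)
    fix \<tau>
    show "apply_bcontfun (Psi t (H t v) (Bcontfun zg)) \<tau> = apply_bcontfun (Bcontfun zg) \<tau>"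
    proof -
      have eqf: "(\<lambda>\<sigma>. f \<sigma> (xw t (H t v) \<sigma> + zg \<sigma>)) = (\<lambda>\<sigma>. f \<sigma> (y \<sigma>))"
        by (rule ext) (simp only: yxz)
      show ?thesis unfolding Psi_apply Bcontfun_inverse[OF zgb] eqf by (simp only: zg_def)
    qed
  qed
  then have "Bcontfun zg = zf t (H t v)" by (rule zf_unique)
  then have "apply_bcontfun (zf t (H t v)) t = zg t" using Bcontfun_inverse[OF zgb] by simp
  then show ?thesis unfolding L_def using yxz[of t] xw_t[of t "H t v"] by (simp add: y_def ysP(1))
qed

lemma L_bound: "norm (L t w - w) \<le> K * \<alpha> * (1 / \<bar>a\<bar> + 1 / b)"
proof -
  have "norm (Gr (\<lambda>\<sigma>. f \<sigma> (xw t w \<sigma> + apply_bcontfun (zf t w) \<sigma>)) t) \<le> \<alpha> * \<theta>"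
    by (rule Gr_bound[OF adm_xz]) (use f_bound \<alpha>_pos in \<open>auto simp: m_def\<close>)
  then have "norm (apply_bcontfun (zf t w) t) \<le> \<alpha> * \<theta>" by (simp only: zf_eq[where t=t and w=w and \<tau>=t, symmetric])
  then show ?thesis by (simp add: L_def theta_alpha)
qed

end



context thm10 begin

lemma tail_choice:
  assumes "C1 \<ge> 0" "C2 \<ge> 0" "e > 0"
  shows "\<exists>S\<ge>0. \<forall>R\<ge>S. C1 * h (t - R) powr (- a) + C2 * k (t + R) powr (- b) < e"
proof -
  have f1: "filterlim (\<lambda>R::real. t - R) at_bot at_top"
    unfolding filterlim_at_bot
  proof
    fix Z :: real show "\<forall>\<^sub>F R in at_top. t - R \<le> Z"
      using eventually_ge_at_top[of "t - Z"] by eventually_elim simp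
  qed
  have f2: "filterlim (\<lambda>R::real. t + R) at_top at_top"
    unfolding filterlim_at_top
  proof
    fix Z :: real show "\<forall>\<^sub>F R in at_top. Z \<le> t + R"
      using eventually_ge_at_top[of "Z - t"] by eventually_elim simp
  qed
  have l1: "((\<lambda>R. h (t - R) powr (- a)) \<longlongrightarrow> 0) at_top"
    by (rule tendsto_zero_powrI[OF filterlim_compose[OF gr_bot[OF gr(1)] f1]])
       (use a_neg hpos in \<open>auto intro!: always_eventually less_imp_le\<close>)
  have l2: "((\<lambda>R. k (t + R) powr (- b)) \<longlongrightarrow> 0) at_top"
    by (rule tendsto_neg_powr) (use b_pos filterlim_compose[OF gr_top[OF gr(2)] f2] in auto)
  have "((\<lambda>R. C1 * h (t - R) powr (- a) + C2 * k (t + R) powr (- b)) \<longlongrightarrow> C1 * 0 + C2 * 0) at_top"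
    by (intro tendsto_intros l1 l2)
  then have "\<forall>\<^sub>F R in at_top. C1 * h (t - R) powr (- a) + C2 * k (t + R) powr (- b) < e"
    using assms by (intro order_tendstoD(2)) auto
  then obtain S where S: "\<And>R. R \<ge> S \<Longrightarrow> C1 * h (t - R) powr (- a) + C2 * k (t + R) powr (- b) < e"
    unfolding eventually_at_top_linorder by blast
  show ?thesis by (rule exI[of _ "max S 0"]) (use S in auto)
qed

lemma Gr_diff_tail:
  assumes ad: "adm u1" "adm u2"
    and b1: "\<And>\<sigma>. norm (u1 \<sigma> - u2 \<sigma>) \<le> \<beta>1 * m \<sigma>"
    and b2: "\<And>\<sigma>. c1 \<le> \<sigma> \<Longrightarrow> \<sigma> \<le> c2 \<Longrightarrow> norm (u1 \<sigma> - u2 \<sigma>) \<le> \<beta>2 * m \<sigma>"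
    and "c1 \<le> \<tau>" "\<tau> \<le> c2" "\<beta>1 \<ge> 0" "\<beta>2 \<ge> 0"
  shows "norm (Gr u1 \<tau> - Gr u2 \<tau>) \<le> \<beta>2 * \<theta> +
     \<beta>1 * K * (h \<tau> powr a * h c1 powr (- a) / (- a) + k \<tau> powr b * k c2 powr (- b) / b)"
proof -
  have g: "norm (Gr u1 \<tau> - Gr u2 \<tau>) \<le> K * \<beta>2 / (- a) * (1 - h \<tau> powr a * h c1 powr (- a))
      + K * \<beta>1 / (- a) * (h \<tau> powr a * h c1 powr (- a))
      + (K * \<beta>2 / b * (1 - k \<tau> powr b * k c2 powr (- b))
      + K * \<beta>1 / b * (k \<tau> powr b * k c2 powr (- b)))"
    by (rule Gr_diff_gen[OF ad b1 b2]) (use assms in auto)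
  have c1: "K * \<beta>2 / (- a) \<ge> 0" using K_pos a_neg assms by (intro divide_nonneg_pos) auto
  have c2: "K * \<beta>2 / b \<ge> 0" using K_pos b_pos assms by (intro divide_nonneg_pos) auto
  have p1: "K * \<beta>2 / (- a) * (1 - h \<tau> powr a * h c1 powr (- a)) \<le> K * \<beta>2 / (- a) * 1"
    by (rule mult_left_mono[OF _ c1]) simp
  have p2: "K * \<beta>2 / b * (1 - k \<tau> powr b * k c2 powr (- b)) \<le> K * \<beta>2 / b * 1"
    by (rule mult_left_mono[OF _ c2]) simp
  have "K * \<beta>2 / (- a) * 1 + K * \<beta>1 / (- a) * (h \<tau> powr a * h c1 powr (- a))
      + (K * \<beta>2 / b * 1 + K * \<beta>1 / b * (k \<tau> powr b * k c2 powr (- b)))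
      = \<beta>2 * \<theta> + \<beta>1 * K * (h \<tau> powr a * h c1 powr (- a) / (- a) + k \<tau> powr b * k c2 powr (- b) / b)"
    using a_neg b_pos by (simp add: \<theta>_def field_simps)
  then show ?thesis using g p1 p2 by linarith
qed

lemma LP_mono: "s \<le> t \<Longrightarrow> LA s + \<gamma> * ln (h s) \<le> LA t + \<gamma> * ln (h t)"
  by (rule lode.Lm_mono[OF lode_P])

lemma H_cont: "continuous_on UNIV (H t)"
proof (intro continuous_at_imp_continuous_on ballI)
  fix v0 :: 'a
  define LP where "LP s = LA s + \<gamma> * ln (h s)" for s
  show "isCont (H t) v0"
    unfolding continuous_at_eps_delta
  proof (intro allI impI)
    fix e :: real assume e: "e > 0"
    have C1: "2 * \<alpha> * K * (h t powr a / (- a)) \<ge> 0" using \<alpha>_pos K_pos a_neg by (intro mult_nonneg_nonneg divide_nonneg_pos) auto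
    have C2: "2 * \<alpha> * K * (k t powr b / b) \<ge> 0" using \<alpha>_pos K_pos b_pos by (intro mult_nonneg_nonneg divide_nonneg_pos) auto
    obtain R where R: "R \<ge> 0" "2 * \<alpha> * K * (h t powr a / (- a)) * h (t - R) powr (- a) +
        2 * \<alpha> * K * (k t powr b / b) * k (t + R) powr (- b) < e / 3"
      using tail_choice[OF C1 C2, of "e/3" t] e by auto
    define M where "M = 2 * exp (2 * (LP (t + R) - LP (t - R)))"
    have M0: "M > 0" by (simp add: M_def)
    have th0: "\<theta> > 0" unfolding \<theta>_def using K_pos a_neg b_pos by (intro mult_pos_pos add_pos_pos) auto
    define d where "d = min (e / 3) (e / (3 * (\<gamma> * \<theta> * M)))"
    have d0: "d > 0" using e \<gamma>_pos th0 M0 by (simp add: d_def)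
    show "\<exists>d>0. \<forall>v. dist v v0 < d \<longrightarrow> dist (H t v) (H t v0) < e"
    proof (intro exI conjI allI impI)
      show "d > 0" by (rule d0)
      fix v assume v: "dist v v0 < d"
      let ?y = "ysP t v" and ?yb = "ysP t v0"
      have yy: "norm (?y \<sigma> - ?yb \<sigma>) \<le> M * norm (v - v0)" if "t - R \<le> \<sigma>" "\<sigma> \<le> t + R" for \<sigma>
      proof -
        have "norm (?y \<sigma> - ?yb \<sigma>) \<le> 2 * norm (?y t - ?yb t) * exp (2 * \<bar>LP \<sigma> - LP t\<bar>)"
          unfolding LP_def by (rule lode.gronwall[OF lode_P ysP(2)[rule_format] ysP(2)[rule_format]])
        also have "\<dots> \<le> 2 * norm (v - v0) * exp (2 * (LP (t + R) - LP (t - R)))"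
        proof -
          have "\<bar>LP \<sigma> - LP t\<bar> \<le> LP (t + R) - LP (t - R)"
            using LP_mono[of \<sigma> "t+R"] LP_mono[of "t-R" \<sigma>] LP_mono[of t "t+R"] LP_mono[of "t-R" t] that R
            by (auto simp: LP_def)
          then have "exp (2 * \<bar>LP \<sigma> - LP t\<bar>) \<le> exp (2 * (LP (t + R) - LP (t - R)))" by simp
          then show ?thesis by (simp add: ysP(1) mult_left_mono)
        qed
        finally show ?thesis by (simp add: M_def mult_ac)
      qed
      have ad1: "adm (\<lambda>\<sigma>. f \<sigma> (?y \<sigma>))" and ad0: "adm (\<lambda>\<sigma>. f \<sigma> (?yb \<sigma>))"
        by (rule adm_f[OF psol_cont[OF ysP(2)]])+
      have b1: "norm (f \<sigma> (?y \<sigma>) - f \<sigma> (?yb \<sigma>)) \<le> (2 * \<alpha>) * m \<sigma>" for \<sigma>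
      proof -
        have "norm (f \<sigma> (?y \<sigma>)) \<le> \<alpha> * m \<sigma>" "norm (f \<sigma> (?yb \<sigma>)) \<le> \<alpha> * m \<sigma>"
          using f_bound by (simp_all add: m_def)
        then show ?thesis using norm_triangle_ineq4[of "f \<sigma> (?y \<sigma>)" "f \<sigma> (?yb \<sigma>)"] by linarith
      qed
      have b2: "norm (f \<sigma> (?y \<sigma>) - f \<sigma> (?yb \<sigma>)) \<le> (\<gamma> * (M * norm (v - v0))) * m \<sigma>"
        if "t - R \<le> \<sigma>" "\<sigma> \<le> t + R" for \<sigma>
      proof -
        have "norm (f \<sigma> (?y \<sigma>) - f \<sigma> (?yb \<sigma>)) \<le> \<gamma> * m \<sigma> * norm (?y \<sigma> - ?yb \<sigma>)"
          using f_lip by (simp add: m_def)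
        also have "\<dots> \<le> \<gamma> * m \<sigma> * (M * norm (v - v0))"
          using yy[OF that] \<gamma>_pos m_nn by (intro mult_left_mono) auto
        finally show ?thesis by (simp add: mult_ac)
      qed
      have "norm (Gr (\<lambda>\<sigma>. f \<sigma> (?y \<sigma>)) t - Gr (\<lambda>\<sigma>. f \<sigma> (?yb \<sigma>)) t) \<le>
          (\<gamma> * (M * norm (v - v0))) * \<theta> + (2 * \<alpha>) * K * (h t powr a * h (t - R) powr (- a) / (- a) + k t powr b * k (t + R) powr (- b) / b)"
        by (rule Gr_diff_tail[OF ad1 ad0 b1 b2]) (use R \<alpha>_pos \<gamma>_pos M0 in auto)
      also have "(2 * \<alpha>) * K * (h t powr a * h (t - R) powr (- a) / (- a) + k t powr b * k (t + R) powr (- b) / b)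
          = 2 * \<alpha> * K * (h t powr a / (- a)) * h (t - R) powr (- a) + 2 * \<alpha> * K * (k t powr b / b) * k (t + R) powr (- b)"
        by (simp add: field_simps)
      also have "(\<gamma> * (M * norm (v - v0))) * \<theta> \<le> e / 3"
      proof -
        have "norm (v - v0) \<le> e / (3 * (\<gamma> * \<theta> * M))" using v by (simp add: dist_norm d_def)
        then have "(\<gamma> * \<theta> * M) * norm (v - v0) \<le> (\<gamma> * \<theta> * M) * (e / (3 * (\<gamma> * \<theta> * M)))"
          using \<gamma>_pos th0 M0 by (intro mult_left_mono) auto
        also have "\<dots> = e / 3" using \<gamma>_pos th0 M0 by simp
        finally show ?thesis by (simp add: mult_ac)
      qed
      finally have gd: "norm (Gr (\<lambda>\<sigma>. f \<sigma> (?y \<sigma>)) t - Gr (\<lambda>\<sigma>. f \<sigma> (?yb \<sigma>)) t) < e / 3 + e / 3"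
        using R(2) by linarith
      have "H t v - H t v0 = (v - v0) - (Gr (\<lambda>\<sigma>. f \<sigma> (?y \<sigma>)) t - Gr (\<lambda>\<sigma>. f \<sigma> (?yb \<sigma>)) t)"
        unfolding H_def by (simp add: algebra_simps)
      then have "norm (H t v - H t v0) \<le> norm (v - v0) + norm (Gr (\<lambda>\<sigma>. f \<sigma> (?y \<sigma>)) t - Gr (\<lambda>\<sigma>. f \<sigma> (?yb \<sigma>)) t)"
        by (metis norm_triangle_ineq4)
      moreover have "norm (v - v0) < e / 3" using v by (simp add: dist_norm d_def)
      ultimately show "dist (H t v) (H t v0) < e" using gd by (simp add: dist_norm)
    qed
  qed
qed

end



context thm10 begin

definition zi where "zi t w n = (Psi t w ^^ n) (const_bcontfun 0)"

lemma zi_Suc: "apply_bcontfun (zi t w (Suc n)) \<tau> = Gr (\<lambda>\<sigma>. f \<sigma> (xw t w \<sigma> + apply_bcontfun (zi t w n) \<sigma>)) \<tau>"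
  by (simp add: zi_def Psi_apply)

lemma th_pos: "\<theta> > 0"
  unfolding \<theta>_def using K_pos a_neg b_pos by (intro mult_pos_pos add_pos_pos) auto

lemma zf_bound: "norm (apply_bcontfun (zf t w) \<tau>) \<le> \<alpha> * \<theta>"
proof -
  have "norm (Gr (\<lambda>\<sigma>. f \<sigma> (xw t w \<sigma> + apply_bcontfun (zf t w) \<sigma>)) \<tau>) \<le> \<alpha> * \<theta>"
    by (rule Gr_bound[OF adm_xz]) (use f_bound \<alpha>_pos in \<open>auto simp: m_def\<close>)
  then show ?thesis by (simp only: zf_eq[where t=t and w=w and \<tau>=\<tau>, symmetric])
qed

lemma zi_conv: "dist (zi t w n) (zf t w) \<le> (\<gamma> * \<theta>) ^ n * (\<alpha> * \<theta>)"
proof (induction n)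
  case 0
  have "dist (const_bcontfun 0) (zf t w) \<le> \<alpha> * \<theta>"
    by (rule dist_bound) (simp add: dist_norm zf_bound const_bcontfun.rep_eq)
  then show ?case by (simp add: zi_def)
next
  case (Suc n)
  have "dist (zi t w (Suc n)) (zf t w) = dist (Psi t w (zi t w n)) (Psi t w (zf t w))"
    by (simp add: zi_def zf_fix)
  also have "\<dots> \<le> \<gamma> * \<theta> * dist (zi t w n) (zf t w)" by (rule Psi_contr)
  also have "\<dots> \<le> \<gamma> * \<theta> * ((\<gamma> * \<theta>) ^ n * (\<alpha> * \<theta>))"
    by (rule mult_left_mono[OF Suc.IH gt_nn])
  finally show ?case by (simp add: mult_ac)
qed

lemma U_bounded: "\<exists>M\<ge>0. \<forall>\<sigma>\<in>{c..d}. norm (U \<sigma>) \<le> M"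
proof -
  have "bounded (U ` {c..d})" by (rule compact_imp_bounded[OF compact_continuous_image[OF U_cont compact_Icc]])
  then obtain M where "\<forall>x\<in>U ` {c..d}. norm x \<le> M" unfolding bounded_iff by blast
  then show ?thesis by (intro exI[of _ "max M 0"]) auto
qed

lemma zi_cont:
  "\<forall>R>0. \<forall>e>0. \<exists>\<delta>>0. \<forall>w. dist w w0 < \<delta> \<longrightarrow>
     (\<forall>\<tau>. t - R \<le> \<tau> \<longrightarrow> \<tau> \<le> t + R \<longrightarrow> norm (apply_bcontfun (zi t w n) \<tau> - apply_bcontfun (zi t w0 n) \<tau>) \<le> e)"
proof (induction n)
  case 0
  then show ?case by (auto simp: zi_def)
next
  case (Suc n)
  show ?case
  proof (intro allI impI)
    fix R e :: real assume R: "R > 0" and e: "e > 0"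
    have C1: "2 * \<alpha> * K * (h (t - R) powr a / (- a)) \<ge> 0" using \<alpha>_pos K_pos a_neg by (intro mult_nonneg_nonneg divide_nonneg_pos) auto
    have C2: "2 * \<alpha> * K * (k (t + R) powr b / b) \<ge> 0" using \<alpha>_pos K_pos b_pos by (intro mult_nonneg_nonneg divide_nonneg_pos) auto
    obtain S where S: "S \<ge> 0" "\<And>R'. R' \<ge> S \<Longrightarrow> 2 * \<alpha> * K * (h (t - R) powr a / (- a)) * h (t - R') powr (- a) +
        2 * \<alpha> * K * (k (t + R) powr b / b) * k (t + R') powr (- b) < e / 2"
      using tail_choice[OF C1 C2, of "e/2" t] e by auto
    define R2 where "R2 = max S R + 1"
    have R2: "R2 > 0" "R2 \<ge> S" "R2 \<ge> R" using R S by (auto simp: R2_def)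
    obtain MU where MU: "MU \<ge> 0" "\<And>\<sigma>. \<sigma> \<in> {t - R2..t + R2} \<Longrightarrow> norm (U \<sigma>) \<le> MU"
      using U_bounded[of "t - R2" "t + R2"] by auto
    define Mx where "Mx = MU * norm (V t) + 1"
    have Mx: "Mx > 0" using MU by (simp add: Mx_def add_nonneg_pos)
    have gtp: "\<gamma> * \<theta> > 0" using \<gamma>_pos th_pos by simp
    define e' where "e' = e / (4 * (\<gamma> * \<theta>))"
    have e': "e' > 0" using e gtp by (simp add: e'_def)
    obtain \<delta>1 where \<delta>1: "\<delta>1 > 0" "\<And>w. dist w w0 < \<delta>1 \<Longrightarrow> \<forall>\<tau>. t - R2 \<le> \<tau> \<longrightarrow> \<tau> \<le> t + R2 \<longrightarrow>
        norm (apply_bcontfun (zi t w n) \<tau> - apply_bcontfun (zi t w0 n) \<tau>) \<le> e'"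
      using Suc.IH R2(1) e' by blast
    define \<delta>2 where "\<delta>2 = e / (4 * (\<gamma> * \<theta>) * Mx)"
    have \<delta>2: "\<delta>2 > 0" using e gtp Mx by (simp add: \<delta>2_def)
    show "\<exists>\<delta>>0. \<forall>w. dist w w0 < \<delta> \<longrightarrow> (\<forall>\<tau>. t - R \<le> \<tau> \<longrightarrow> \<tau> \<le> t + R \<longrightarrow>
        norm (apply_bcontfun (zi t w (Suc n)) \<tau> - apply_bcontfun (zi t w0 (Suc n)) \<tau>) \<le> e)"
    proof (intro exI conjI allI impI)
      show "min \<delta>1 \<delta>2 > 0" using \<delta>1 \<delta>2 by simp
      fix w \<tau> assume w: "dist w w0 < min \<delta>1 \<delta>2" and \<tau>: "t - R \<le> \<tau>" "\<tau> \<le> t + R"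
      let ?u1 = "\<lambda>\<sigma>. f \<sigma> (xw t w \<sigma> + apply_bcontfun (zi t w n) \<sigma>)"
      let ?u2 = "\<lambda>\<sigma>. f \<sigma> (xw t w0 \<sigma> + apply_bcontfun (zi t w0 n) \<sigma>)"
      have b1: "norm (?u1 \<sigma> - ?u2 \<sigma>) \<le> (2 * \<alpha>) * m \<sigma>" for \<sigma>
      proof -
        have "norm (?u1 \<sigma>) \<le> \<alpha> * m \<sigma>" "norm (?u2 \<sigma>) \<le> \<alpha> * m \<sigma>"
          using f_bound by (simp_all add: m_def)
        then show ?thesis using norm_triangle_ineq4[of "?u1 \<sigma>" "?u2 \<sigma>"] by linarith
      qed
      have b2: "norm (?u1 \<sigma> - ?u2 \<sigma>) \<le> (\<gamma> * (Mx * \<delta>2 + e')) * m \<sigma>"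
        if s: "t - R2 \<le> \<sigma>" "\<sigma> \<le> t + R2" for \<sigma>
      proof -
        have dx: "norm (xw t w \<sigma> - xw t w0 \<sigma>) \<le> Mx * \<delta>2"
        proof -
          have "xw t w \<sigma> - xw t w0 \<sigma> = U \<sigma> (V t (w - w0))" by (simp add: xw_def blinfun.bilinear_simps)
          moreover have "norm (U \<sigma> (V t (w - w0))) \<le> norm (U \<sigma>) * (norm (V t) * norm (w - w0))"
          proof -
            have "norm (U \<sigma> (V t (w - w0))) \<le> norm (U \<sigma>) * norm (V t (w - w0))" by (rule norm_blinfun)
            also have "\<dots> \<le> norm (U \<sigma>) * (norm (V t) * norm (w - w0))"
              by (intro mult_left_mono norm_blinfun) simp
            finally show ?thesis .
          qed
          ultimately have "norm (xw t w \<sigma> - xw t w0 \<sigma>) \<le> norm (U \<sigma>) * (norm (V t) * norm (w - w0))"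
            by simp
          also have "\<dots> \<le> MU * (norm (V t) * \<delta>2)"
            using MU s w by (intro mult_mono) (auto simp: dist_norm intro!: mult_left_mono)
          also have "\<dots> \<le> Mx * \<delta>2" using \<delta>2 by (simp add: Mx_def algebra_simps)
          finally show ?thesis .
        qed
        have dz: "norm (apply_bcontfun (zi t w n) \<sigma> - apply_bcontfun (zi t w0 n) \<sigma>) \<le> e'"
          using \<delta>1(2)[of w] w s by auto
        have "norm (?u1 \<sigma> - ?u2 \<sigma>) \<le> \<gamma> * m \<sigma> * norm ((xw t w \<sigma> + apply_bcontfun (zi t w n) \<sigma>) - (xw t w0 \<sigma> + apply_bcontfun (zi t w0 n) \<sigma>))"
          using f_lip by (simp add: m_def)
        also have "\<dots> \<le> \<gamma> * m \<sigma> * (Mx * \<delta>2 + e')"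
        proof (rule mult_left_mono)
          have "norm ((xw t w \<sigma> + apply_bcontfun (zi t w n) \<sigma>) - (xw t w0 \<sigma> + apply_bcontfun (zi t w0 n) \<sigma>))
              \<le> norm (xw t w \<sigma> - xw t w0 \<sigma>) + norm (apply_bcontfun (zi t w n) \<sigma> - apply_bcontfun (zi t w0 n) \<sigma>)"
            by (rule order_trans[OF _ norm_triangle_ineq]) (simp add: algebra_simps)
          then show "norm ((xw t w \<sigma> + apply_bcontfun (zi t w n) \<sigma>) - (xw t w0 \<sigma> + apply_bcontfun (zi t w0 n) \<sigma>)) \<le> Mx * \<delta>2 + e'"
            using dx dz by linarith
          show "0 \<le> \<gamma> * m \<sigma>" using \<gamma>_pos m_nn by simp
        qed
        finally show ?thesis by (simp add: mult_ac)
      qed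
      have ad1: "adm ?u1" and ad2: "adm ?u2" by (rule adm_xz)+
      have "norm (Gr ?u1 \<tau> - Gr ?u2 \<tau>) \<le> (\<gamma> * (Mx * \<delta>2 + e')) * \<theta> +
          (2 * \<alpha>) * K * (h \<tau> powr a * h (t - R2) powr (- a) / (- a) + k \<tau> powr b * k (t + R2) powr (- b) / b)"
        by (rule Gr_diff_tail[OF ad1 ad2 b1 b2]) (use \<tau> R2 \<alpha>_pos \<gamma>_pos Mx \<delta>2 e' in auto)
      also have "(\<gamma> * (Mx * \<delta>2 + e')) * \<theta> = e / 2"
        using gtp Mx \<gamma>_pos th_pos by (simp add: \<delta>2_def e'_def field_simps)
      also have "(2 * \<alpha>) * K * (h \<tau> powr a * h (t - R2) powr (- a) / (- a) + k \<tau> powr b * k (t + R2) powr (- b) / b)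
          \<le> 2 * \<alpha> * K * (h (t - R) powr a / (- a)) * h (t - R2) powr (- a) +
            2 * \<alpha> * K * (k (t + R) powr b / b) * k (t + R2) powr (- b)"
      proof -
        have ha: "h \<tau> powr a \<le> h (t - R) powr a"
          by (rule powr_mono2') (use a_neg hpos gr_mono[OF gr(1)] \<tau> in auto)
        have kb: "k \<tau> powr b \<le> k (t + R) powr b"
          by (rule powr_mono2) (use b_pos kpos gr_mono[OF gr(2)] \<tau> in \<open>auto intro: less_imp_le\<close>)
        have c: "2 * \<alpha> * K \<ge> 0" using \<alpha>_pos K_pos by simp
        have "h \<tau> powr a * h (t - R2) powr (- a) / (- a) \<le> h (t - R) powr a * h (t - R2) powr (- a) / (- a)"
          using ha a_neg by (intro divide_right_mono mult_right_mono) auto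
        moreover have "k \<tau> powr b * k (t + R2) powr (- b) / b \<le> k (t + R) powr b * k (t + R2) powr (- b) / b"
          using kb b_pos by (intro divide_right_mono mult_right_mono) auto
        ultimately have "(2 * \<alpha>) * K * (h \<tau> powr a * h (t - R2) powr (- a) / (- a) + k \<tau> powr b * k (t + R2) powr (- b) / b)
           \<le> (2 * \<alpha>) * K * (h (t - R) powr a * h (t - R2) powr (- a) / (- a) + k (t + R) powr b * k (t + R2) powr (- b) / b)"
          using c by (intro mult_left_mono add_mono) auto
        then show ?thesis by (simp add: field_simps)
      qed
      also have "\<dots> < e / 2" by (rule S(2)[OF R2(2)])
      finally show "norm (apply_bcontfun (zi t w (Suc n)) \<tau> - apply_bcontfun (zi t w0 (Suc n)) \<tau>) \<le> e"
        by (simp add: zi_Suc)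
    qed
  qed
qed

lemma L_cont: "continuous_on UNIV (L t)"
proof (intro continuous_at_imp_continuous_on ballI)
  fix w0 :: 'a
  show "isCont (L t) w0"
    unfolding continuous_at_eps_delta
  proof (intro allI impI)
    fix e :: real assume e: "e > 0"
    have "(\<lambda>n. (\<gamma> * \<theta>) ^ n * (\<alpha> * \<theta>)) \<longlonglongrightarrow> 0 * (\<alpha> * \<theta>)"
      using gt_lt1 gt_nn by (intro tendsto_intros) auto
    then have "\<forall>\<^sub>F n in sequentially. (\<gamma> * \<theta>) ^ n * (\<alpha> * \<theta>) < e / 4"
      using e by (intro order_tendstoD(2)) auto
    then obtain n where n: "(\<gamma> * \<theta>) ^ n * (\<alpha> * \<theta>) < e / 4"
      unfolding eventually_sequentially by auto
    obtain \<delta>1 where \<delta>1: "\<delta>1 > 0" "\<And>w. dist w w0 < \<delta>1 \<Longrightarrow> \<forall>\<tau>. t - 1 \<le> \<tau> \<longrightarrow> \<tau> \<le> t + 1 \<longrightarrow>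
        norm (apply_bcontfun (zi t w n) \<tau> - apply_bcontfun (zi t w0 n) \<tau>) \<le> e / 4"
    proof -
      have "(1::real) > 0" "e / 4 > 0" using e by auto
      then show ?thesis using that zi_cont[of w0 t n] by blast
    qed
    show "\<exists>d>0. \<forall>w. dist w w0 < d \<longrightarrow> dist (L t w) (L t w0) < e"
    proof (intro exI conjI allI impI)
      show "min \<delta>1 (e / 4) > 0" using \<delta>1 e by simp
      fix w assume w: "dist w w0 < min \<delta>1 (e / 4)"
      have z1: "norm (apply_bcontfun (zf t w) t - apply_bcontfun (zi t w n) t) \<le> e / 4"
        using dist_bounded[of "zf t w" t "zi t w n"] zi_conv[of t w n] n by (simp add: dist_norm norm_minus_commute)
      have z2: "norm (apply_bcontfun (zi t w0 n) t - apply_bcontfun (zf t w0) t) \<le> e / 4"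
        using dist_bounded[of "zi t w0 n" t "zf t w0"] zi_conv[of t w0 n] n by (simp add: dist_norm)
      have z3: "norm (apply_bcontfun (zi t w n) t - apply_bcontfun (zi t w0 n) t) \<le> e / 4"
        using \<delta>1(2)[of w] w by auto
      have "L t w - L t w0 = (w - w0) + ((apply_bcontfun (zf t w) t - apply_bcontfun (zi t w n) t)
          + (apply_bcontfun (zi t w n) t - apply_bcontfun (zi t w0 n) t) + (apply_bcontfun (zi t w0 n) t - apply_bcontfun (zf t w0) t))"
        by (simp add: L_def algebra_simps)
      note eqL = this
      have "norm (L t w - L t w0) \<le> norm (w - w0) + (norm (apply_bcontfun (zf t w) t - apply_bcontfun (zi t w n) t)
          + norm (apply_bcontfun (zi t w n) t - apply_bcontfun (zi t w0 n) t) + norm (apply_bcontfun (zi t w0 n) t - apply_bcontfun (zf t w0) t))"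
        unfolding eqL using norm_triangle_ineq[of "w - w0" "(apply_bcontfun (zf t w) t - apply_bcontfun (zi t w n) t)
          + (apply_bcontfun (zi t w n) t - apply_bcontfun (zi t w0 n) t) + (apply_bcontfun (zi t w0 n) t - apply_bcontfun (zf t w0) t)"]
          norm_triangle_ineq[of "(apply_bcontfun (zf t w) t - apply_bcontfun (zi t w n) t)
          + (apply_bcontfun (zi t w n) t - apply_bcontfun (zi t w0 n) t)" "(apply_bcontfun (zi t w0 n) t - apply_bcontfun (zf t w0) t)"]
          norm_triangle_ineq[of "(apply_bcontfun (zf t w) t - apply_bcontfun (zi t w n) t)"
            "(apply_bcontfun (zi t w n) t - apply_bcontfun (zi t w0 n) t)"]
        by linarith
      moreover have "norm (w - w0) < e / 4" using w by (simp add: dist_norm)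
      ultimately show "dist (L t w) (L t w0) < e" using z1 z2 z3 by (simp add: dist_norm)
    qed
  qed
qed

end


context thm10 begin
lemma injH: "inj (H t)"
  proof (rule injI)
    fix x y assume a: "H t x = H t y"
    have "x = L t (H t x)" by (rule L_H[symmetric])
    also have "\<dots> = L t (H t y)" by (simp only: a)
    also have "\<dots> = y" by (rule L_H)
    finally show "x = y" .
  qed
lemma invH: "inv (H t) y = L t y"
proof -
  have "inv (H t) y = inv (H t) (H t (L t y))" by (simp only: H_L)
  also have "\<dots> = L t y" by (rule inv_f_f[OF injH])
  finally show ?thesis .
qed

lemma t1: "\<exists>R. \<forall>t x. R \<le> norm x \<longrightarrow> M \<le> norm (H t x)"
    proof (intro exI allI impI)
      fix t and x :: 'a assume "M + K * \<alpha> * (1 / \<bar>a\<bar> + 1 / b) \<le> norm x"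
      moreover have "norm x - norm (H t x - x) \<le> norm (H t x)"
        using norm_triangle_ineq3[of x "H t x"] norm_minus_commute[of x "H t x"] by linarith
      moreover have "norm (H t x - x) \<le> K * \<alpha> * (1 / \<bar>a\<bar> + 1 / b)" by (rule H_bound)
      ultimately show "M \<le> norm (H t x)" by linarith
    qed
lemma t1b: "\<exists>R. \<forall>t y. R \<le> norm y \<longrightarrow> M \<le> norm (inv (H t) y)"
    proof (intro exI allI impI)
      fix t and y :: 'a assume "M + K * \<alpha> * (1 / \<bar>a\<bar> + 1 / b) \<le> norm y"
      moreover have "norm y - norm (L t y - y) \<le> norm (L t y)"
        using norm_triangle_ineq3[of y "L t y"] norm_minus_commute[of y "L t y"] by linarith
      moreover have "norm (L t y - y) \<le> K * \<alpha> * (1 / \<bar>a\<bar> + 1 / b)" by (rule L_bound)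
      ultimately show "M \<le> norm (inv (H t) y)" unfolding invH by linarith
    qed
lemma t2: "homeomorphism UNIV UNIV (H t) (L t)"
        unfolding homeomorphism_def
      proof (intro conjI ballI)
        show "continuous_on UNIV (H t)" by (rule H_cont)
        show "continuous_on UNIV (L t)" by (rule L_cont)
        show "L t (H t x) = x" for x by (rule L_H)
        show "H t (L t y) = y" for y by (rule H_L)
        show "H t ` UNIV = UNIV" by (rule surjI[of "H t" "L t"]) (rule H_L)
        show "L t ` UNIV = UNIV" by (rule surjI[of "L t" "H t"]) (rule L_H)
      qed
lemma t3: "solves (\<lambda>t x. A t x + f t x) x \<Longrightarrow> solves (\<lambda>t x. A t x) (\<lambda>t. H t (x t))"
proof -
    assume "solves (\<lambda>t x. A t x + f t x) x"
    then have "psol x" by (simp add: solves_def Fp_def)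
    then show "solves (\<lambda>t x. A t x) (\<lambda>t. H t (x t))"
      unfolding solves_def by (intro allI H_lin[OF \<open>psol x\<close>])
qed

lemma main: "\<exists>H. top_equiv_via (\<lambda>t x. A t x) (\<lambda>t x. A t x + f t x) H \<and>
             (\<forall>t x. norm (H t x - x) \<le> K * \<alpha> * (1 / \<bar>a\<bar> + 1 / b))"
proof (rule exI[of _ H], rule conjI)
  show "\<forall>t x. norm (H t x - x) \<le> K * \<alpha> * (1 / \<bar>a\<bar> + 1 / b)" using H_bound by blast
  show "top_equiv_via (\<lambda>t x. A t x) (\<lambda>t x. A t x + f t x) H"
    unfolding top_equiv_via_def
  proof (intro conjI allI impI)
    show "\<exists>R. \<forall>t x. R \<le> norm x \<longrightarrow> M \<le> norm (H t x)" for M by (rule t1)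
    show "\<exists>R. \<forall>t y. R \<le> norm y \<longrightarrow> M \<le> norm (inv (H t) y)" for M by (rule t1b)
    show "\<exists>L. homeomorphism UNIV UNIV (H t) L" for t by (rule exI, rule t2)
    show "solves (\<lambda>t x. A t x) (\<lambda>t. H t (x t))" if "solves (\<lambda>t x. A t x + f t x) x" for x
      by (rule t3[OF that])
  qed
qed

end

theorem mainTheorem10:
  fixes A :: "real \<Rightarrow> ('a::banach \<Rightarrow>\<^sub>L 'a)"
    and T :: "real \<Rightarrow> real \<Rightarrow> ('a \<Rightarrow>\<^sub>L 'a)"
    and f :: "real \<Rightarrow> 'a \<Rightarrow> 'a"
    and h k \<mu> \<nu> h' k' :: "real \<Rightarrow> real"
    and a b \<epsilon> K \<alpha> \<gamma> :: real
  assumes A_cont: "continuous_on UNIV A"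
    and T_evol: "evolution_op A T"
    and gr: "growth_rate h" "growth_rate k" "growth_rate \<mu>" "growth_rate \<nu>"
    and h_deriv: "\<And>t. (h has_real_derivative h' t) (at t)"
    and k_deriv: "\<And>t. (k has_real_derivative k' t) (at t)"
    and dich: "nonuniform_dichotomy T h k \<mu> \<nu> a b \<epsilon> K"
    and b_pos: "b > 0"
    and f_cont: "continuous_on UNIV (\<lambda>(t, x). f t x)"
    and \<alpha>_pos: "\<alpha> > 0" and \<gamma>_pos: "\<gamma> > 0"
    and f_bound: "\<And>t x. norm (f t x) \<le>
       \<alpha> * min (h' t / h t * \<mu> \<bar>t\<bar> powr (- \<epsilon>)) (k' t / k t * \<nu> \<bar>t\<bar> powr (- \<epsilon>))"
    and f_lip: "\<And>t x1 x2. norm (f t x1 - f t x2) \<le>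
       \<gamma> * min (h' t / h t * \<mu> \<bar>t\<bar> powr (- \<epsilon>)) (k' t / k t * \<nu> \<bar>t\<bar> powr (- \<epsilon>))
         * norm (x1 - x2)"
    and small: "K * \<gamma> * (1 / \<bar>a\<bar> + 1 / b) < 1"
  shows "\<exists>H. top_equiv_via (\<lambda>t x. A t x) (\<lambda>t x. A t x + f t x) H \<and>
             (\<forall>t x. norm (H t x - x) \<le> K * \<alpha> * (1 / \<bar>a\<bar> + 1 / b))"
proof -
  interpret thm10 A T f h k \<mu> \<nu> h' k' a b \<epsilon> K \<alpha> \<gamma>
    by (rule thm10.intro[OF A_cont T_evol gr h_deriv k_deriv dich b_pos f_cont \<alpha>_pos \<gamma>_pos f_bound f_lip small])
  show ?thesis by (rule main)
qed


end
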